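(* Consider Problem (P) under Assumptions A1–A6 and B1–B2, with surrogates $\widetilde f_i$ satisfying F1–F3. Let $\{\mathbf{x}[n]\}_n=\{(\mathbf{x}_i[n])_{i=1}^I\}_n$ be generated by the exact NEXT algorithm (Algorithm 1, i.e. the iteration below with $\mathbf{x}_i^{\rm inx}[n]=\widetilde{\mathbf{x}}_i[n]$), and let $\overline{\mathbf{x}}[n]=\frac1I\sum_{i=1}^I\mathbf{x}_i[n]$. Suppose the step-sizes satisfy $\alpha[n]\in(0,1]$ for all $n$, $\sum_{n=0}^\infty\alpha[n]=\infty$ and $\sum_{n=0}^\infty\alpha[n]^2<\infty$. Then: (a) the sequence $\{\overline{\mathbf{x}}[n]\}_n$ is bounded and every limit point of it is a stationary solution of (P); (b) $\|\mathbf{x}_i[n]-\overline{\mathbf{x}}[n]\|\to0$ as $n\to\infty$ for every $i=1,\dots,I$.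
   Context: Problem (P): minimize $U(\mathbf{x})=F(\mathbf{x})+G(\mathbf{x})$ subject to $\mathbf{x}\in\mathcal K\subseteq\mathbb R^m$, where $F=\sum_{i=1}^I f_i$. Assumptions: (A1) $\mathcal K$ nonempty, closed, convex; (A2) each $f_i:\mathbb R^m\to\mathbb R$ is $C^1$ (possibly nonconvex) on an open set containing $\mathcal K$; (A3) each $\nabla f_i$ is Lipschitz on $\mathcal K$ with constant $L_i$; (A4) $\|\nabla F(\mathbf{x})\|\le L_F$ on $\mathcal K$ for some finite $L_F$; (A5) $G$ is convex (possibly nonsmooth) with all subgradients on $\mathcal K$ bounded in norm by some finite $L_G$; (A6) $U$ is coercive on $\mathcal K$. A point $\mathbf{x}^*\in\mathcal K$ is a stationary solution of (P) if there is a subgradient $\boldsymbol\xi\in\partial G(\mathbf{x}^* )$ with $(\nabla F(\mathbf{x}^* )+\boldsymbol\xi)^T(\mathbf{y}-\mathbf{x}^* )\ge0$ for all $\mathbf{y}\in\mathcal K$. Network: at each time $n$ a digraph $\mathcal G[n]=(\{1,\dots,I\},\mathcal E[n])$; $\mathcal N_i^{\rm in}[n]=\{j:(j,i)\in\mathcal E[n]\}\cup\{i\}$. Weights: $w_{ij}[n]=\theta_{ij}\in[\vartheta,1]$ if $j\in\mathcal N_i^{\rm in}[n]$ and $w_{ij}[n]=0$ otherwise, for a fixed $\vartheta\in(0,1)$; $\mathbf W[n]=(w_{ij}[n])$. (B1) there is an integer $B>0$ such that for every $k\ge0$ the graph with edge set $\bigcup_{n=kB}^{(k+1)B-1}\mathcal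 E[n]$ is strongly connected; (B2) $\mathbf W[n]\mathbf 1=\mathbf 1$ and $\mathbf 1^T\mathbf W[n]=\mathbf 1^T$ for all $n$. Surrogates $\widetilde f_i(\cdot;\mathbf{x}):\mathcal K\to\mathbb R$ (differentiable in the first argument) satisfy: (F1) $\widetilde f_i(\cdot;\mathbf{x})$ is strongly convex on $\mathcal K$ with constant $\tau_i>0$ uniformly in $\mathbf{x}\in\mathcal K$; (F2) $\nabla\widetilde f_i(\mathbf{x};\mathbf{x})=\nabla f_i(\mathbf{x})$ for all $\mathbf{x}\in\mathcal K$ (gradient w.r.t. the first argument); (F3) $\nabla\widetilde f_i(\mathbf{x};\cdot)$ is Lipschitz on $\mathcal K$ uniformly in $\mathbf{x}\in\mathcal K$. NEXT iteration (inexact version; the exact version has $\varepsilon_i[n]=0$): initialize $\mathbf{x}_i[0]\in\mathcal K$, $\mathbf y_i[0]=\nabla f_i(\mathbf{x}_i[0])$, $\widetilde{\boldsymbol\pi}_i[0]=I\mathbf y_i[0]-\nabla f_i(\mathbf{x}_i[0])$. For $n\ge0$ each agent $i$: computes $\widetilde{\mathbf{x}}_i[n]=\arg\min_{\mathbf{x}\in\mathcal K}\{\widetilde f_i(\mathbf{x};\mathbf{x}_i[n])+\widetilde{\boldsymbol\pi}_i[n]^T(\mathbf{x}-\mathbf{x}_i[n])+G(\mathbf{x})\}$; picks $\mathbf{x}_i^{\rm inx}[n]\in\mathcal K$ with $\|\mathbf{x}_i^{\rm inx}[n]-\widetilde{\mathbf{x}}_i[n]\|\le\varepsilon_i[n]$;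 sets $\mathbf z_i[n]=\mathbf{x}_i[n]+\alpha[n](\mathbf{x}_i^{\rm inx}[n]-\mathbf{x}_i[n])$; then $\mathbf{x}_i[n+1]=\sum_{j=1}^I w_{ij}[n]\mathbf z_j[n]$, $\mathbf y_i[n+1]=\sum_{j=1}^I w_{ij}[n]\mathbf y_j[n]+\nabla f_i(\mathbf{x}_i[n+1])-\nabla f_i(\mathbf{x}_i[n])$, $\widetilde{\boldsymbol\pi}_i[n+1]=I\mathbf y_i[n+1]-\nabla f_i(\mathbf{x}_i[n+1])$. *)

theory Defs
  imports "HOL-Analysis.Analysis"
begin

definition subdiff :: "('a::euclidean_space \<Rightarrow> real) \<Rightarrow> 'a \<Rightarrow> 'a set" where
  "subdiff G x = {\<xi>. \<forall>y. G y \<ge> G x + \<xi> \<bullet> (y - x)}"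

definition strongly_convex_on :: "'a::euclidean_space set \<Rightarrow> real \<Rightarrow> ('a \<Rightarrow> real) \<Rightarrow> bool" where
  "strongly_convex_on S \<tau> h \<longleftrightarrow>
     (\<forall>x\<in>S. \<forall>z\<in>S. \<forall>t::real. 0 \<le> t \<and> t \<le> 1 \<longrightarrow>
        h (t *\<^sub>R x + (1 - t) *\<^sub>R z) \<le> t * h x + (1 - t) * h z - \<tau> / 2 * t * (1 - t) * (norm (x - z))\<^sup>2)"

definition coercive_on :: "'a::euclidean_space set \<Rightarrow> ('a \<Rightarrow> real) \<Rightarrow> bool" where
  "coercive_on K U \<longleftrightarrow> (\<forall>M. \<exists>R. \<forall>x\<in>K. norm x \<ge> R \<longrightarrow> U x \<ge> M)"

definition stationary :: "'a::euclidean_space set \<Rightarrow> ('a \<Rightarrow> 'a) \<Rightarrow> ('a \<Rightarrow> real) \<Rightarrow> 'a \<Rightarrow> bool" where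
  "stationary K gradF G xs \<longleftrightarrow> xs \<in> K \<and>
     (\<exists>\<xi>\<in>subdiff G xs. \<forall>y\<in>K. (gradF xs + \<xi>) \<bullet> (y - xs) \<ge> 0)"

definition in_nbrs :: "(nat \<Rightarrow> (nat \<times> nat) set) \<Rightarrow> nat \<Rightarrow> nat \<Rightarrow> nat set" where
  "in_nbrs E n i = {j. (j, i) \<in> E n} \<union> {i}"

definition weight :: "(nat \<Rightarrow> (nat \<times> nat) set) \<Rightarrow> (nat \<Rightarrow> nat \<Rightarrow> real) \<Rightarrow> nat \<Rightarrow> nat \<Rightarrow> nat \<Rightarrow> real" where
  "weight E \<theta> n i j = (if j \<in> in_nbrs E n i then \<theta> i j else 0)"

definition strongly_connected_dg :: "nat set \<Rightarrow> (nat \<times> nat) set \<Rightarrow> bool" where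
  "strongly_connected_dg V Ed \<longleftrightarrow> (\<forall>i\<in>V. \<forall>j\<in>V. (i, j) \<in> (Ed \<inter> (V \<times> V))\<^sup>*)"

end

theory Submission
  imports Defs
begin

lemma dq_limit:
  fixes f :: "'a::euclidean_space \<Rightarrow> real"
  assumes der: "(f has_derivative (\<lambda>h. g \<bullet> h)) (at x within K)"
    and K: "convex K" "x \<in> K" "w \<in> K"
  shows "((\<lambda>t. (f (x + t *\<^sub>R (w - x)) - f x) / t) \<longlongrightarrow> g \<bullet> (w - x)) (at_right 0)"
proof -
  define p where "p t = x + t *\<^sub>R (w - x)" for t :: real
  have pK: "p ` {0..1} \<subseteq> K"
  proof
    fix y assume "y \<in> p ` {0..1}"
    then obtain t where t: "t \<in> {0..1}" "y = p t" by auto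
    have "p t = (1 - t) *\<^sub>R x + t *\<^sub>R w" by (simp add: p_def algebra_simps)
    then show "y \<in> K" using t K convexD[OF K(1) K(2) K(3), of "1-t" t] by auto
  qed
  have dp: "(p has_derivative (\<lambda>s. s *\<^sub>R (w - x))) (at 0 within {0..1})"
    unfolding p_def by (auto intro!: derivative_eq_intros)
  have df: "(f has_derivative (\<lambda>h. g \<bullet> h)) (at (p 0) within p ` {0..1})"
    using has_derivative_subset[OF der pK] by (simp add: p_def)
  have "((f \<circ> p) has_derivative ((\<lambda>h. g \<bullet> h) \<circ> (\<lambda>s. s *\<^sub>R (w - x)))) (at 0 within {0..1})"
    by (rule diff_chain_within[OF dp df])
  moreover have "((\<lambda>h. g \<bullet> h) \<circ> (\<lambda>s. s *\<^sub>R (w - x))) = (*) (g \<bullet> (w - x))"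
    by (auto simp: fun_eq_iff)
  ultimately have "((f \<circ> p) has_field_derivative (g \<bullet> (w - x))) (at 0 within {0..1})"
    by (simp add: has_field_derivative_def)
  then have "((\<lambda>y. ((f \<circ> p) y - (f \<circ> p) 0) / (y - 0)) \<longlongrightarrow> g \<bullet> (w - x)) (at 0 within {0..1})"
    by (simp add: has_field_derivative_iff)
  moreover have "at (0::real) within {0..1} = at_right 0" by (rule at_within_Icc_at_right) simp
  ultimately show ?thesis by (simp add: p_def)
qed

lemma ev_01: "eventually (\<lambda>t::real. 0 < t \<and> t < 1) (at_right 0)"
  unfolding eventually_at_right_field by (rule exI[of _ 1]) auto

lemma fosc:
  fixes f :: "'a::euclidean_space \<Rightarrow> real"
  assumes sc: "strongly_convex_on K \<tau> f"
    and der: "(f has_derivative (\<lambda>h. g \<bullet> h)) (at x within K)"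
    and K: "convex K" "x \<in> K" "w \<in> K"
  shows "f w \<ge> f x + g \<bullet> (w - x) + \<tau> / 2 * (norm (w - x))\<^sup>2"
proof -
  let ?d = "(norm (w - x))\<^sup>2"
  have lim1: "((\<lambda>t. (f (x + t *\<^sub>R (w - x)) - f x) / t) \<longlongrightarrow> g \<bullet> (w - x)) (at_right 0)"
    by (rule dq_limit[OF der K])
  have lim2: "((\<lambda>t. f w - f x - \<tau> / 2 * (1 - t) * ?d) \<longlongrightarrow> f w - f x - \<tau> / 2 * (1 - 0) * ?d) (at_right 0)"
    by (intro tendsto_intros)
  have ev: "eventually (\<lambda>t. (f (x + t *\<^sub>R (w - x)) - f x) / t \<le> f w - f x - \<tau> / 2 * (1 - t) * ?d) (at_right 0)"
    using ev_01
  proof (rule eventually_mono)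
    fix t :: real assume t: "0 < t \<and> t < 1"
    have "f (t *\<^sub>R w + (1 - t) *\<^sub>R x) \<le> t * f w + (1 - t) * f x - \<tau> / 2 * t * (1 - t) * (norm (w - x))\<^sup>2"
      using sc K t unfolding strongly_convex_on_def by auto
    moreover have "t *\<^sub>R w + (1 - t) *\<^sub>R x = x + t *\<^sub>R (w - x)" by (simp add: algebra_simps)
    ultimately have "f (x + t *\<^sub>R (w - x)) - f x \<le> t * (f w - f x - \<tau> / 2 * (1 - t) * ?d)"
      by (simp add: algebra_simps)
    then show "(f (x + t *\<^sub>R (w - x)) - f x) / t \<le> f w - f x - \<tau> / 2 * (1 - t) * ?d"
      using t by (simp add: divide_le_eq mult.commute)
  qed
  have "g \<bullet> (w - x) \<le> f w - f x - \<tau> / 2 * (1 - 0) * ?d"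
    by (rule tendsto_le[OF _ lim2 lim1 ev]) simp
  then show ?thesis by simp
qed

lemma sc_comb:
  fixes f G :: "'a::euclidean_space \<Rightarrow> real"
  assumes sc: "strongly_convex_on K \<tau> f" and G: "convex_on UNIV G"
  shows "strongly_convex_on K \<tau> (\<lambda>w. f w + p \<bullet> (w - q) + G w)"
  unfolding strongly_convex_on_def
proof (intro ballI allI impI)
  fix a b and t :: real assume ab: "a \<in> K" "b \<in> K" and t: "0 \<le> t \<and> t \<le> 1"
  have 1: "f (t *\<^sub>R a + (1 - t) *\<^sub>R b) \<le> t * f a + (1 - t) * f b - \<tau> / 2 * t * (1 - t) * (norm (a - b))\<^sup>2"
    using sc ab t unfolding strongly_convex_on_def by auto
  have 2: "G (t *\<^sub>R a + (1 - t) *\<^sub>R b) \<le> t * G a + (1 - t) * G b"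
    using convex_onD[OF G, of t b a] t by (auto simp: add.commute)
  have 3: "p \<bullet> (t *\<^sub>R a + (1 - t) *\<^sub>R b - q) = t * (p \<bullet> (a - q)) + (1 - t) * (p \<bullet> (b - q))"
    by (simp add: algebra_simps inner_diff_right)
  show "f (t *\<^sub>R a + (1 - t) *\<^sub>R b) + p \<bullet> (t *\<^sub>R a + (1 - t) *\<^sub>R b - q) + G (t *\<^sub>R a + (1 - t) *\<^sub>R b)
        \<le> t * (f a + p \<bullet> (a - q) + G a) + (1 - t) * (f b + p \<bullet> (b - q) + G b) - \<tau> / 2 * t * (1 - t) * (norm (a - b))\<^sup>2"
    using 1 2 3 by (simp add: algebra_simps)
qed

lemma sc_argmin:
  fixes \<phi> :: "'a::euclidean_space \<Rightarrow> real"
  assumes sc: "strongly_convex_on K \<tau> \<phi>" and cK: "convex K" and u: "u \<in> K" and w: "w \<in> K"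
    and opt: "\<forall>v\<in>K. \<phi> u \<le> \<phi> v"
  shows "\<phi> w - \<phi> u \<ge> \<tau> / 2 * (norm (w - u))\<^sup>2"
proof -
  let ?d = "(norm (w - u))\<^sup>2"
  have lim: "((\<lambda>t. \<tau> / 2 * (1 - t) * ?d) \<longlongrightarrow> \<tau> / 2 * (1 - 0) * ?d) (at_right 0)"
    by (intro tendsto_intros)
  have ev: "eventually (\<lambda>t. \<tau> / 2 * (1 - t) * ?d \<le> \<phi> w - \<phi> u) (at_right 0)"
    using ev_01
  proof (rule eventually_mono)
    fix t :: real assume t: "0 < t \<and> t < 1"
    have "\<phi> (t *\<^sub>R w + (1 - t) *\<^sub>R u) \<le> t * \<phi> w + (1 - t) * \<phi> u - \<tau> / 2 * t * (1 - t) * ?d"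
      using sc u w t unfolding strongly_convex_on_def by auto
    moreover have "t *\<^sub>R w + (1 - t) *\<^sub>R u \<in> K" using convexD[OF cK u w, of "1-t" t] t by (simp add: add.commute)
    ultimately have "t * (\<tau> / 2 * (1 - t) * ?d) \<le> t * (\<phi> w - \<phi> u)"
      using opt by (force simp: algebra_simps)
    then show "\<tau> / 2 * (1 - t) * ?d \<le> \<phi> w - \<phi> u" using t by simp
  qed
  show ?thesis using tendsto_upperbound[OF lim ev] by simp
qed

lemma sum_rule:
  fixes G :: "'a::euclidean_space \<Rightarrow> real"
  assumes G: "convex_on UNIV G" and K: "convex K" "x0 \<in> K"
    and opt: "\<forall>w\<in>K. G x0 \<le> G w + g \<bullet> (w - x0)"
  shows "\<exists>\<xi>\<in>subdiff G x0. \<forall>w\<in>K. (g + \<xi>) \<bullet> (w - x0) \<ge> 0"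
proof -
  define S :: "('a \<times> real) set" where "S = {(d, r). G (x0 + d) - G x0 < r}"
  define T :: "('a \<times> real) set" where "T = {(d, r). x0 + d \<in> K \<and> r \<le> - (g \<bullet> d)}"
  have cS: "convex S" unfolding convex_def
  proof (intro ballI allI impI)
    fix p q :: "'a \<times> real" and u v :: real
    assume p: "p \<in> S" and q: "q \<in> S" and uv: "0 \<le> u" "0 \<le> v" "u + v = 1"
    obtain d1 r1 where p': "p = (d1, r1)" by force
    obtain d2 r2 where q': "q = (d2, r2)" by force
    have h1: "G (x0 + d1) - G x0 < r1" using p p' S_def by auto
    have h2: "G (x0 + d2) - G x0 < r2" using q q' S_def by auto
    have eq: "x0 + (u *\<^sub>R d1 + v *\<^sub>R d2) = (1 - v) *\<^sub>R (x0 + d1) + v *\<^sub>R (x0 + d2)"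
      using uv by (simp add: algebra_simps flip: scaleR_add_left)
    have "G (x0 + (u *\<^sub>R d1 + v *\<^sub>R d2)) \<le> (1 - v) * G (x0 + d1) + v * G (x0 + d2)"
      unfolding eq using convex_onD[OF G, of v "x0 + d1" "x0 + d2"] uv by auto
    also have "\<dots> = u * G (x0 + d1) + v * G (x0 + d2)" using uv by simp
    finally have A: "G (x0 + (u *\<^sub>R d1 + v *\<^sub>R d2)) \<le> u * G (x0 + d1) + v * G (x0 + d2)" .
    have B: "u * (G (x0 + d1) - G x0) + v * (G (x0 + d2) - G x0) < u * r1 + v * r2"
    proof (cases "u = 0")
      case True then show ?thesis using uv h2 by simp
    next
      case False then have "u > 0" using uv by simp
      then have "u * (G (x0 + d1) - G x0) < u * r1" using h1 by simp
      moreover have "v * (G (x0 + d2) - G x0) \<le> v * r2" using h2 uv by (simp add: mult_left_mono)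
      ultimately show ?thesis by simp
    qed
    have "u * G x0 + v * G x0 = G x0" using uv by (metis distrib_right mult_1)
    then have "G (x0 + (u *\<^sub>R d1 + v *\<^sub>R d2)) - G x0 < u * r1 + v * r2"
      using A B uv by (simp add: algebra_simps)
    then show "u *\<^sub>R p + v *\<^sub>R q \<in> S" using p' q' S_def by simp
  qed
  have cT: "convex T" unfolding convex_def
  proof (intro ballI allI impI)
    fix p q :: "'a \<times> real" and u v :: real
    assume p: "p \<in> T" and q: "q \<in> T" and uv: "0 \<le> u" "0 \<le> v" "u + v = 1"
    obtain d1 r1 where p': "p = (d1, r1)" by force
    obtain d2 r2 where q': "q = (d2, r2)" by force
    have h1: "x0 + d1 \<in> K" "r1 \<le> - (g \<bullet> d1)" using p p' T_def by auto
    have h2: "x0 + d2 \<in> K" "r2 \<le> - (g \<bullet> d2)" using q q' T_def by auto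
    have eq: "x0 + (u *\<^sub>R d1 + v *\<^sub>R d2) = u *\<^sub>R (x0 + d1) + v *\<^sub>R (x0 + d2)"
      using uv by (simp add: algebra_simps flip: scaleR_add_left)
    have m: "x0 + (u *\<^sub>R d1 + v *\<^sub>R d2) \<in> K"
      unfolding eq using K(1) h1(1) h2(1) uv unfolding convex_def by blast
    have "u * r1 \<le> u * (- (g \<bullet> d1))" using mult_left_mono[OF h1(2) uv(1)] by simp
    moreover have "v * r2 \<le> v * (- (g \<bullet> d2))" using mult_left_mono[OF h2(2) uv(2)] by simp
    ultimately have "u * r1 + v * r2 \<le> - (g \<bullet> (u *\<^sub>R d1 + v *\<^sub>R d2))"
      by (simp add: inner_add_right)
    then show "u *\<^sub>R p + v *\<^sub>R q \<in> T" using p' q' T_def m by simp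
  qed
  have neS: "S \<noteq> {}"
  proof -
    have "(0, 1) \<in> S" unfolding S_def by simp
    then show ?thesis by blast
  qed
  have neT: "T \<noteq> {}"
  proof -
    have "(0, 0) \<in> T" unfolding T_def using K by simp
    then show ?thesis by blast
  qed
  have dis: "S \<inter> T = {}"
  proof (rule ccontr)
    assume "S \<inter> T \<noteq> {}"
    then obtain d r where "(d, r) \<in> S" "(d, r) \<in> T" by auto
    then have "G (x0 + d) - G x0 < r" "x0 + d \<in> K" "r \<le> - (g \<bullet> d)" using S_def T_def by auto
    moreover have "G x0 \<le> G (x0 + d) + g \<bullet> (x0 + d - x0)" using opt calculation(2) by blast
    ultimately show False by simp
  qed
  obtain a b where ab: "a \<noteq> 0" "\<forall>p\<in>S. inner a p \<le> b" "\<forall>p\<in>T. inner a p \<ge> b"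
    using separating_hyperplane_sets[OF cS cT neS neT dis] by blast
  obtain a1 a2 where a: "a = (a1, a2)" by force
  have Sin: "a1 \<bullet> d + a2 * r \<le> b" if "G (x0 + d) - G x0 < r" for d r
    using ab(2) that a S_def by auto
  have Tin: "a1 \<bullet> d + a2 * r \<ge> b" if "x0 + d \<in> K" "r \<le> - (g \<bullet> d)" for d r
    using ab(3) that a T_def by auto
  have b0: "b \<le> 0" using Tin[of 0 0] K by simp
  have a2le: "a2 \<le> 0" using Sin[of 0 1] b0 by simp
  have a2ne: "a2 \<noteq> 0"
  proof
    assume "a2 = 0"
    then have "a1 \<bullet> a1 \<le> b" using Sin[of a1 "G (x0 + a1) - G x0 + 1"] by simp
    then have "a1 = 0" using b0 by (metis inner_ge_zero inner_eq_zero_iff order.trans antisym)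
    then show False using \<open>a2 = 0\<close> a ab(1) by (simp add: zero_prod_def)
  qed
  define c where "c = - a2"
  have c: "c > 0" using a2le a2ne c_def by simp
  have bge: "b \<ge> 0"
  proof (rule ccontr)
    assume "\<not> b \<ge> 0"
    then have bn: "b < 0" by simp
    have pos: "- b / (2 * c) > 0" using bn c by (intro divide_pos_pos) auto
    have "a2 * (- b / (2 * c)) \<le> b" using Sin[of 0 "- b / (2 * c)"] pos by simp
    moreover have "a2 * (- b / (2 * c)) = b / 2" using c unfolding c_def by (simp add: field_simps)
    ultimately show False using bn by simp
  qed
  define \<xi> where "\<xi> = (1 / c) *\<^sub>R a1"
  have sub: "\<xi> \<in> subdiff G x0" unfolding subdiff_def
  proof (intro CollectI allI)
    fix y
    have "G x0 + \<xi> \<bullet> (y - x0) \<le> G y + e" if e: "e > 0" for e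
    proof -
      have "a1 \<bullet> (y - x0) + a2 * (G (x0 + (y - x0)) - G x0 + e) \<le> b"
        by (rule Sin) (use e in simp)
      then have "a1 \<bullet> (y - x0) - c * (G y - G x0 + e) \<le> 0" using b0 c_def by simp
      then have "(1 / c) * (a1 \<bullet> (y - x0)) \<le> G y - G x0 + e" using c by (simp add: field_simps)
      then show ?thesis by (simp add: \<xi>_def)
    qed
    then show "G y \<ge> G x0 + \<xi> \<bullet> (y - x0)" by (rule field_le_epsilon)
  qed
  have "\<forall>w\<in>K. (g + \<xi>) \<bullet> (w - x0) \<ge> 0"
  proof
    fix w assume w: "w \<in> K"
    have "a1 \<bullet> (w - x0) + a2 * (- (g \<bullet> (w - x0))) \<ge> b" by (rule Tin) (use w in simp_all)
    then have "a1 \<bullet> (w - x0) + c * (g \<bullet> (w - x0)) \<ge> 0" using bge c_def by simp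
    then have "(1 / c) * (a1 \<bullet> (w - x0)) + g \<bullet> (w - x0) \<ge> 0" using c by (simp add: field_simps)
    then show "(g + \<xi>) \<bullet> (w - x0) \<ge> 0" by (simp add: \<xi>_def inner_add_left)
  qed
  with sub show ?thesis by blast
qed

lemma subgrad_exists:
  fixes G :: "'a::euclidean_space \<Rightarrow> real"
  assumes G: "convex_on UNIV G"
  shows "\<exists>\<xi>. \<xi> \<in> subdiff G x0"
proof -
  have "\<forall>w\<in>{x0}. G x0 \<le> G w + 0 \<bullet> (w - x0)" by simp
  then show ?thesis using sum_rule[of G "{x0}" x0 0] G by auto
qed

lemma minstat:
  fixes h G :: "'a::euclidean_space \<Rightarrow> real"
  assumes der: "(h has_derivative (\<lambda>v. gh \<bullet> v)) (at x0 within K)"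
    and K: "convex K" "x0 \<in> K" and G: "convex_on UNIV G"
    and opt: "\<forall>w\<in>K. h x0 + G x0 \<le> h w + G w"
  shows "\<forall>w\<in>K. G x0 \<le> G w + gh \<bullet> (w - x0)"
proof
  fix w assume w: "w \<in> K"
  have lim1: "((\<lambda>t. (h (x0 + t *\<^sub>R (w - x0)) - h x0) / t + (G w - G x0)) \<longlongrightarrow> gh \<bullet> (w - x0) + (G w - G x0)) (at_right 0)"
    by (intro tendsto_intros dq_limit[OF der K w])
  have ev: "eventually (\<lambda>t. 0 \<le> (h (x0 + t *\<^sub>R (w - x0)) - h x0) / t + (G w - G x0)) (at_right 0)"
    using ev_01
  proof (rule eventually_mono)
    fix t :: real assume t: "0 < t \<and> t < 1"
    have eq: "x0 + t *\<^sub>R (w - x0) = (1 - t) *\<^sub>R x0 + t *\<^sub>R w" by (simp add: algebra_simps)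
    have mem: "x0 + t *\<^sub>R (w - x0) \<in> K" unfolding eq using convexD[OF K(1) K(2) w, of "1-t" t] t by simp
    have Gc: "G (x0 + t *\<^sub>R (w - x0)) \<le> (1 - t) * G x0 + t * G w"
      unfolding eq using convex_onD[OF G, of t x0 w] t by simp
    have "h x0 + G x0 \<le> h (x0 + t *\<^sub>R (w - x0)) + G (x0 + t *\<^sub>R (w - x0))" using opt mem by blast
    then have "0 \<le> h (x0 + t *\<^sub>R (w - x0)) - h x0 + t * (G w - G x0)" using Gc by (simp add: algebra_simps)
    then have "0 \<le> (h (x0 + t *\<^sub>R (w - x0)) - h x0 + t * (G w - G x0)) / t" using t by simp
    also have "\<dots> = (h (x0 + t *\<^sub>R (w - x0)) - h x0) / t + (G w - G x0)" using t by (simp add: field_simps)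
    finally show "0 \<le> (h (x0 + t *\<^sub>R (w - x0)) - h x0) / t + (G w - G x0)" .
  qed
  have "0 \<le> gh \<bullet> (w - x0) + (G w - G x0)" by (rule tendsto_lowerbound[OF lim1 ev]) simp
  then show "G x0 \<le> G w + gh \<bullet> (w - x0)" by simp
qed

lemma summable_rec:
  fixes a b :: "nat \<Rightarrow> real"
  assumes a0: "\<And>k. a k \<ge> 0" and b0: "\<And>k. b k \<ge> 0" and sb: "summable b"
    and \<rho>: "0 \<le> \<rho>" "\<rho> < 1" and rec: "\<And>k. k \<ge> k0 \<Longrightarrow> a (Suc k) \<le> \<rho> * a k + b k"
  shows "summable a"
proof -
  define a' where "a' n = a (n + k0)" for n
  define b' where "b' n = b (n + k0)" for n
  have sb': "summable b'" unfolding b'_def using sb by simp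
  have rec': "a' (Suc n) \<le> \<rho> * a' n + b' n" for n using rec[of "n + k0"] by (simp add: a'_def b'_def)
  have bnd: "(1 - \<rho>) * (\<Sum>n<N. a' n) \<le> a' 0 + suminf b'" for N
  proof -
    have "(\<Sum>n<N. a' (Suc n)) \<le> (\<Sum>n<N. \<rho> * a' n + b' n)" by (rule sum_mono) (rule rec')
    also have "\<dots> = \<rho> * (\<Sum>n<N. a' n) + (\<Sum>n<N. b' n)" by (simp add: sum.distrib sum_distrib_left)
    also have "(\<Sum>n<N. b' n) \<le> suminf b'"
      by (rule sum_le_suminf[OF sb']) (auto simp: b'_def b0)
    finally have 1: "(\<Sum>n<N. a' (Suc n)) \<le> \<rho> * (\<Sum>n<N. a' n) + suminf b'" by simp
    have "(\<Sum>n<Suc N. a' n) = a' 0 + (\<Sum>n<N. a' (Suc n))" by (rule sum.lessThan_Suc_shift)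
    moreover have "(\<Sum>n<N. a' n) \<le> (\<Sum>n<Suc N. a' n)" using a0 by (simp add: a'_def)
    ultimately show ?thesis using 1 by (simp add: algebra_simps)
  qed
  have "summable a'"
  proof (rule summableI_nonneg_bounded)
    show "0 \<le> a' n" for n using a0 by (simp add: a'_def)
    show "(\<Sum>n<N. a' n) \<le> (a' 0 + suminf b') / (1 - \<rho>)" for N
      using bnd[of N] \<rho> by (simp add: field_simps)
  qed
  then show ?thesis unfolding a'_def by simp
qed

lemma telescope_bound:
  fixes g \<beta> :: "nat \<Rightarrow> real"
  assumes "\<And>k. g (Suc k) - g k \<le> \<beta> k" "m \<le> n"
  shows "g n - g m \<le> (\<Sum>k\<in>{m..<n}. \<beta> k)"
  using assms(2)
proof (induction n)
  case 0 then show ?case by simp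
next
  case (Suc n)
  show ?case
  proof (cases "m = Suc n")
    case True then show ?thesis by simp
  next
    case False
    then have "m \<le> n" using Suc by simp
    then have "g n - g m \<le> (\<Sum>k\<in>{m..<n}. \<beta> k)" using Suc by simp
    moreover have "(\<Sum>k\<in>{m..<Suc n}. \<beta> k) = (\<Sum>k\<in>{m..<n}. \<beta> k) + \<beta> n" using \<open>m \<le> n\<close> by simp
    ultimately show ?thesis using assms(1)[of n] by simp
  qed
qed

lemma cross_lemma:
  fixes g \<alpha> :: "nat \<Rightarrow> real"
  assumes g0: "\<And>n. g n \<ge> 0" and a0: "\<And>n. \<alpha> n \<ge> 0" and c: "c > 0"
    and inc: "\<And>n. g (Suc n) - g n \<le> c * \<alpha> n"
    and alim: "\<alpha> \<longlonglongrightarrow> 0" and sag: "summable (\<lambda>n. \<alpha> n * g n)" and ns: "\<not> summable \<alpha>"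
  shows "g \<longlonglongrightarrow> 0"
proof (rule LIMSEQ_I)
  fix r :: real assume r: "r > 0"
  define \<delta> where "\<delta> = r / 4"
  have \<delta>: "\<delta> > 0" using r \<delta>_def by simp
  show "\<exists>N. \<forall>n\<ge>N. norm (g n - 0) < r"
  proof (rule ccontr)
    assume H: "\<not> (\<exists>N. \<forall>n\<ge>N. norm (g n - 0) < r)"
    have big: "\<exists>n\<ge>N. g n > 2 * \<delta>" for N
    proof -
      obtain n where "n \<ge> N" "\<not> norm (g n - 0) < r" using H by blast
      then show ?thesis using g0[of n] \<delta>_def r by (intro exI[of _ n]) auto
    qed
    have small: "\<exists>m\<ge>N. g m < \<delta>" for N
    proof (rule ccontr)
      assume "\<not> (\<exists>m\<ge>N. g m < \<delta>)"
      then have cmp: "\<And>m. m \<ge> N \<Longrightarrow> norm (\<alpha> m) \<le> (1 / \<delta>) * (\<alpha> m * g m)"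
      proof -
        fix m assume "\<not> (\<exists>m\<ge>N. g m < \<delta>)" "m \<ge> N"
        then have "g m \<ge> \<delta>" by auto
        then have "\<alpha> m * \<delta> \<le> \<alpha> m * g m" using a0 by (intro mult_left_mono) auto
        then show "norm (\<alpha> m) \<le> (1 / \<delta>) * (\<alpha> m * g m)" using \<delta> a0[of m] by (simp add: field_simps)
      qed
      have "summable \<alpha>"
        by (rule summable_comparison_test'[of "\<lambda>n. (1 / \<delta>) * (\<alpha> n * g n)" N]) (use sag cmp in \<open>auto intro: summable_mult\<close>)
      then show False using ns by simp
    qed
    obtain N1 where N1: "\<And>n. n \<ge> N1 \<Longrightarrow> \<alpha> n \<le> \<delta> / (2 * c)"
    proof -
      have "\<delta> / (2 * c) > 0" using \<delta> c by simp
      then obtain N where "\<forall>n\<ge>N. norm (\<alpha> n - 0) < \<delta> / (2 * c)" using LIMSEQ_D[OF alim] by blast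
      then show ?thesis using that a0 by fastforce
    qed
    obtain N2 where N2: "\<And>m n. m \<ge> N2 \<Longrightarrow> norm (\<Sum>k\<in>{m..<n}. \<alpha> k * g k) < \<delta> * \<delta> / (2 * c)"
      using sag[unfolded summable_Cauchy] \<delta> c by (metis divide_pos_pos mult_pos_pos zero_less_numeral)
    obtain m where m: "m \<ge> max N1 N2" "g m < \<delta>" using small by blast
    obtain n where n: "n \<ge> m" "g n > 2 * \<delta>" using big by blast
    define A where "A = {k. m \<le> k \<and> k \<le> n \<and> g k < \<delta>}"
    have finA: "finite A" unfolding A_def by simp
    have mA: "m \<in> A" using m n unfolding A_def by simp
    define m' where "m' = Max A"
    have m'A: "m' \<in> A" unfolding m'_def using finA mA Max_in by blast
    have m'1: "m \<le> m'" "m' \<le> n" "g m' < \<delta>" using m'A A_def by auto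
    have m'n: "m' < n" using m'1 n \<delta> by (metis le_neq_implies_less less_le_not_le mult_2 less_add_same_cancel1 order.strict_trans)
    have after: "g k \<ge> \<delta>" if "m' < k" "k \<le> n" for k
    proof (rule ccontr)
      assume "\<not> g k \<ge> \<delta>"
      then have "k \<in> A" using that m'1 unfolding A_def by auto
      then have "k \<le> m'" unfolding m'_def using finA Max_ge by blast
      then show False using that by simp
    qed
    have "g n - g m' \<le> (\<Sum>k\<in>{m'..<n}. c * \<alpha> k)" by (rule telescope_bound[of g "\<lambda>k. c * \<alpha> k"]) (use m'n inc in auto)
    also have "\<dots> = c * \<alpha> m' + (\<Sum>k\<in>{Suc m'..<n}. c * \<alpha> k)"
      using m'n by (simp add: sum.atLeast_Suc_lessThan)
    finally have "\<delta> < c * \<alpha> m' + c * (\<Sum>k\<in>{Suc m'..<n}. \<alpha> k)"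
      using n m'1 by (simp add: sum_distrib_left)
    moreover have "c * \<alpha> m' \<le> \<delta> / 2" using N1[of m'] m m'1 c by (simp add: field_simps)
    ultimately have "\<delta> / 2 < c * (\<Sum>k\<in>{Suc m'..<n}. \<alpha> k)" by simp
    then have S: "\<delta> / (2 * c) < (\<Sum>k\<in>{Suc m'..<n}. \<alpha> k)" using c by (simp add: field_simps)
    have "\<delta> * (\<Sum>k\<in>{Suc m'..<n}. \<alpha> k) \<le> (\<Sum>k\<in>{Suc m'..<n}. \<alpha> k * g k)"
      unfolding sum_distrib_left
    proof (rule sum_mono)
      fix k assume "k \<in> {Suc m'..<n}"
      then have "\<delta> \<le> g k" using after by auto
      then have "\<alpha> k * \<delta> \<le> \<alpha> k * g k" using a0 by (intro mult_left_mono) auto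
      then show "\<delta> * \<alpha> k \<le> \<alpha> k * g k" by (simp add: mult.commute)
    qed
    moreover have "\<delta> * (\<delta> / (2 * c)) < \<delta> * (\<Sum>k\<in>{Suc m'..<n}. \<alpha> k)" using S \<delta> by (rule mult_strict_left_mono)
    moreover have "(\<Sum>k\<in>{Suc m'..<n}. \<alpha> k * g k) < \<delta> * \<delta> / (2 * c)"
      using N2[of "Suc m'" n] m m'1 by auto
    ultimately show False by (simp add: field_simps)
  qed
qed

lemma sum_div_block:
  fixes \<beta> :: "nat \<Rightarrow> real"
  shows "(\<Sum>n<N * P. \<beta> (n div P)) = of_nat P * (\<Sum>k<N. \<beta> k)"
proof (induction N)
  case 0 then show ?case by simp
next
  case (Suc N)
  have "{..<Suc N * P} = {..<N * P} \<union> {N * P..<N * P + P}" by auto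
  then have "(\<Sum>n<Suc N * P. \<beta> (n div P)) = (\<Sum>n<N * P. \<beta> (n div P)) + (\<Sum>n\<in>{N * P..<N * P + P}. \<beta> (n div P))"
    by (simp add: sum.union_disjoint ivl_disj_int)
  moreover have "(\<Sum>n\<in>{N * P..<N * P + P}. \<beta> (n div P)) = (\<Sum>n\<in>{N * P..<N * P + P}. \<beta> N)"
  proof (rule sum.cong)
    fix n assume "n \<in> {N * P..<N * P + P}"
    then have "n div P = N" by (auto intro: div_nat_eqI simp: mult.commute)
    then show "\<beta> (n div P) = \<beta> N" by simp
  qed simp
  ultimately show ?case using Suc by (simp add: algebra_simps)
qed

lemma summable_block:
  fixes f \<beta> :: "nat \<Rightarrow> real"
  assumes f0: "\<And>n. f n \<ge> 0" and fb: "\<And>n. f n \<le> \<beta> (n div P)" and P: "P > 0"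
    and sb: "summable \<beta>"
  shows "summable f"
proof (rule summableI_nonneg_bounded)
  show "0 \<le> f n" for n by (rule f0)
  have b0: "\<beta> k \<ge> 0" for k using f0[of "k * P"] fb[of "k * P"] P by simp
  show "(\<Sum>n<N. f n) \<le> of_nat P * suminf \<beta>" for N
  proof -
    have "(\<Sum>n<N. f n) \<le> (\<Sum>n<N * P. f n)"
      using P f0 by (intro sum_mono2) (auto simp: le_less_trans[OF _ mult_strict_left_mono] intro!: sum_mono2)
    also have "\<dots> \<le> (\<Sum>n<N * P. \<beta> (n div P))" by (rule sum_mono) (rule fb)
    also have "\<dots> = of_nat P * (\<Sum>k<N. \<beta> k)" by (rule sum_div_block)
    also have "\<dots> \<le> of_nat P * suminf \<beta>"
      using sum_le_suminf[OF sb, of "{..<N}"] b0 by (intro mult_left_mono) auto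
    finally show ?thesis .
  qed
qed

definition dm :: "nat set \<Rightarrow> (nat \<Rightarrow> 'a::real_normed_vector) \<Rightarrow> real" where
  "dm V u = Max ((\<lambda>p. norm (u (fst p) - u (snd p))) ` (V \<times> V))"

lemma dm_ge:
  assumes "finite V" "i \<in> V" "j \<in> V"
  shows "norm (u i - u j) \<le> dm V u"
  unfolding dm_def using assms by (intro Max_ge) (auto intro!: image_eqI[of _ _ "(i, j)"])
lemma dm_le:
  assumes "finite V" "V \<noteq> {}" "\<And>i j. i \<in> V \<Longrightarrow> j \<in> V \<Longrightarrow> norm (u i - u j) \<le> c"
  shows "dm V u \<le> c"
  unfolding dm_def using assms by (subst Max_le_iff) auto

lemma dm_nonneg:
  assumes "finite V" "V \<noteq> {}"
  shows "dm V u \<ge> 0"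
proof -
  obtain i where "i \<in> V" using assms by auto
  then show ?thesis using dm_ge[OF assms(1), of i i u] by simp
qed

lemma cross_edge:
  assumes "(a, b) \<in> R\<^sup>*" "a \<in> A" "b \<notin> A"
  shows "\<exists>c d. (c, d) \<in> R \<and> c \<in> A \<and> d \<notin> A"
  using assms by (induction rule: rtrancl_induct) auto

lemma mean_dev:
  fixes u :: "nat \<Rightarrow> 'a::real_normed_vector"
  assumes "finite V" "card V > 0" "i \<in> V"
  shows "norm (u i - (1 / real (card V)) *\<^sub>R (\<Sum>j\<in>V. u j)) \<le> dm V u"
proof -
  have cV: "real (card V) > 0" using assms by simp
  have "u i - (1 / real (card V)) *\<^sub>R (\<Sum>j\<in>V. u j) = (1 / real (card V)) *\<^sub>R (\<Sum>j\<in>V. (u i - u j))"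
  proof -
    have "(\<Sum>j\<in>V. u i) = real (card V) *\<^sub>R u i" by (simp add: sum_constant_scaleR)
    then show ?thesis using cV by (simp add: sum_subtractf scaleR_diff_right)
  qed
  then have "norm (u i - (1 / real (card V)) *\<^sub>R (\<Sum>j\<in>V. u j)) \<le> (1 / real (card V)) * (\<Sum>j\<in>V. norm (u i - u j))"
    using cV by (simp add: norm_sum divide_right_mono)
  also have "\<dots> \<le> (1 / real (card V)) * (\<Sum>j\<in>V. dm V u)"
    using dm_ge[OF assms(1) assms(3)] cV by (intro mult_left_mono sum_mono) auto
  also have "\<dots> = dm V u" using cV by simp
  finally show ?thesis .
qed


locale netw =
  fixes I :: nat and E :: "nat \<Rightarrow> (nat \<times> nat) set" and \<theta> :: "nat \<Rightarrow> nat \<Rightarrow> real"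
    and \<theta>\<^sub>0 :: real and B :: nat
  assumes I_pos: "I \<ge> 1"
    and E_sub: "\<forall>n. E n \<subseteq> {1..I} \<times> {1..I}"
    and vt_range: "0 < \<theta>\<^sub>0" "\<theta>\<^sub>0 < 1"
    and theta_range: "\<forall>i\<in>{1..I}. \<forall>j\<in>{1..I}. \<theta>\<^sub>0 \<le> \<theta> i j \<and> \<theta> i j \<le> 1"
    and B1: "B > 0" "\<forall>k. strongly_connected_dg {1..I} (\<Union>n\<in>{k*B..<(k+1)*B}. E n)"
    and B2: "\<forall>n. \<forall>i\<in>{1..I}. (\<Sum>j\<in>{1..I}. weight E \<theta> n i j) = 1"
            "\<forall>n. \<forall>j\<in>{1..I}. (\<Sum>i\<in>{1..I}. weight E \<theta> n i j) = 1"
begin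

abbreviation "V \<equiv> {1..I}"
abbreviation "w \<equiv> weight E \<theta>"


lemma V_fin: "finite V" and V_ne: "V \<noteq> {}" and V_card: "card V = I"
  using I_pos by auto

lemma w_nonneg: "i \<in> V \<Longrightarrow> j \<in> V \<Longrightarrow> w n i j \<ge> 0"
proof -
  assume "i \<in> V" "j \<in> V"
  then have "\<theta>\<^sub>0 \<le> \<theta> i j" using theta_range by blast
  then show ?thesis using vt_range unfolding weight_def by auto
qed

lemma w_diag: "i \<in> V \<Longrightarrow> w n i i \<ge> \<theta>\<^sub>0"
  using theta_range unfolding weight_def in_nbrs_def by auto

lemma w_edge: "(a, b) \<in> E n \<Longrightarrow> w n b a \<ge> \<theta>\<^sub>0"
  using theta_range E_sub unfolding weight_def in_nbrs_def by fastforce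

lemma w_row: "i \<in> V \<Longrightarrow> (\<Sum>j\<in>V. w n i j) = 1" using B2 by auto
lemma w_col: "j \<in> V \<Longrightarrow> (\<Sum>i\<in>V. w n i j) = 1" using B2 by auto

lemma w_le1: "i \<in> V \<Longrightarrow> j \<in> V \<Longrightarrow> w n i j \<le> 1"
proof -
  assume ij: "i \<in> V" "j \<in> V"
  have "w n i j \<le> (\<Sum>k\<in>V. w n i k)" using ij w_nonneg by (intro member_le_sum) auto
  then show ?thesis using w_row[OF ij(1)] by simp
qed


fun reach :: "nat \<Rightarrow> nat \<Rightarrow> nat \<Rightarrow> nat set" where
  "reach j0 s 0 = {j0}"
| "reach j0 s (Suc n) = reach j0 s n \<union> {b\<in>V. \<exists>a\<in>reach j0 s n. (a, b) \<in> E (s + n)}"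


lemma reach_mono: "m \<le> n \<Longrightarrow> reach j0 s m \<subseteq> reach j0 s n"
  by (induction n) (auto simp: le_Suc_eq)

lemma reach_sub: "j0 \<in> V \<Longrightarrow> reach j0 s n \<subseteq> V"
  by (induction n) auto

lemma reach_j0: "j0 \<in> reach j0 s n"
  using reach_mono[of 0 n j0 s] by auto


lemma reach_grow:
  assumes j0: "j0 \<in> V" and R: "reach j0 (k * B) (m * B) \<noteq> V"
  shows "card (reach j0 (k * B) (Suc m * B)) > card (reach j0 (k * B) (m * B))"
proof -
  let ?R = "reach j0 (k * B) (m * B)"
  have RV: "?R \<subseteq> V" by (rule reach_sub[OF j0])
  obtain b where b: "b \<in> V" "b \<notin> ?R" using R RV by blast
  let ?Ed = "\<Union>n\<in>{(k + m) * B..<(k + m + 1) * B}. E n"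
  have sc: "strongly_connected_dg V ?Ed" using B1(2) by blast
  have "(j0, b) \<in> (?Ed \<inter> (V \<times> V))\<^sup>*"
    using sc j0 b(1) unfolding strongly_connected_dg_def by blast
  moreover have "j0 \<in> ?R" by (rule reach_j0)
  ultimately obtain c d where cd: "(c, d) \<in> ?Ed \<inter> (V \<times> V)" "c \<in> ?R" "d \<notin> ?R"
    using cross_edge[of j0 b _ ?R] b(2) by blast
  then obtain n where n: "n \<in> {(k + m) * B..<(k + m + 1) * B}" "(c, d) \<in> E n" by blast
  define n' where "n' = n - k * B"
  have n1: "(k + m) * B \<le> n" "n < (k + m + 1) * B" using n(1) by auto
  have n'1: "m * B \<le> n'" "n' < Suc m * B" "n = k * B + n'"
    using n1 unfolding n'_def by (simp_all add: algebra_simps)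
  have "c \<in> reach j0 (k * B) n'" using cd(2) reach_mono[OF n'1(1)] by blast
  moreover have "d \<in> V" using cd(1) by blast
  ultimately have "d \<in> reach j0 (k * B) (Suc n')" using n(2) n'1(3) by auto
  moreover have "reach j0 (k * B) (Suc n') \<subseteq> reach j0 (k * B) (Suc m * B)"
    using n'1(2) by (intro reach_mono) simp
  ultimately have dS: "d \<in> reach j0 (k * B) (Suc m * B)" by blast
  have "?R \<subseteq> reach j0 (k * B) (Suc m * B)" by (intro reach_mono) simp
  then have "?R \<subset> reach j0 (k * B) (Suc m * B)" using dS cd(3) by blast
  moreover have "finite (reach j0 (k * B) (Suc m * B))" using reach_sub[OF j0] finite_subset V_fin by blast
  ultimately show ?thesis by (rule psubset_card_mono[rotated])
qed


lemma reach_card: "j0 \<in> V \<Longrightarrow> card (reach j0 (k * B) (m * B)) \<ge> min I (Suc m)"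
proof (induction m)
  case 0 then show ?case using I_pos by simp
next
  case (Suc m)
  show ?case
  proof (cases "reach j0 (k * B) (m * B) = V")
    case True
    then have "V \<subseteq> reach j0 (k * B) (Suc m * B)" using reach_mono[of "m * B" "Suc m * B"] by auto
    moreover have "finite (reach j0 (k * B) (Suc m * B))" using reach_sub[OF Suc.prems] V_fin finite_subset by blast
    ultimately have "card V \<le> card (reach j0 (k * B) (Suc m * B))" by (rule card_mono[rotated])
    then show ?thesis using V_card by simp
  next
    case False
    then show ?thesis using reach_grow[OF Suc.prems False] Suc by simp
  qed
qed

lemma reach_full: "j0 \<in> V \<Longrightarrow> reach j0 (k * B) (I * B) = V"
proof -
  assume j0: "j0 \<in> V"
  have c: "card (reach j0 (k * B) (I * B)) \<ge> card V" using reach_card[OF j0, where k=k and m=I] V_card by simp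
  have s: "reach j0 (k * B) (I * B) \<subseteq> V" using reach_sub[OF j0] .
  show ?thesis using card_seteq[OF V_fin s c] .
qed


end

context netw
begin

lemma sum_w_le:
  fixes p b :: "nat \<Rightarrow> real"
  assumes "i \<in> V" "\<And>j. j \<in> V \<Longrightarrow> p j \<le> b j"
  shows "(\<Sum>j\<in>V. w n i j * p j) \<le> (\<Sum>j\<in>V. w n i j * b j)"
  using assms w_nonneg by (intro sum_mono mult_left_mono) auto

lemma sum_w_const: "i \<in> V \<Longrightarrow> (\<Sum>j\<in>V. w n i j * c) = c"
  using w_row[of i n] by (simp add: sum_distrib_right[symmetric])

lemma scal_upper:
  fixes p \<epsilon> :: "nat \<Rightarrow> nat \<Rightarrow> real" and \<eta> :: "nat \<Rightarrow> real"
  assumes rec: "\<forall>t. \<forall>i\<in>V. p (Suc t) i = (\<Sum>j\<in>V. w t i j * p t j) + \<epsilon> t i"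
    and eb: "\<forall>t. \<forall>i\<in>V. \<epsilon> t i \<le> \<eta> t"
    and j0: "j0 \<in> V" and up: "\<forall>i\<in>V. p s i \<le> M0" and low: "p s j0 \<le> M0 - D" and D: "D \<ge> 0"
  shows "(\<forall>i\<in>V. p (s + n) i \<le> M0 + (\<Sum>t\<in>{s..<s + n}. \<eta> t))
       \<and> (\<forall>i\<in>reach j0 s n. p (s + n) i \<le> M0 + (\<Sum>t\<in>{s..<s + n}. \<eta> t) - \<theta>\<^sub>0 ^ n * D)"
proof (induction n)
  case 0 then show ?case using up low by simp
next
  case (Suc n)
  define S where "S = M0 + (\<Sum>t\<in>{s..<s + n}. \<eta> t)"
  have S1: "M0 + (\<Sum>t\<in>{s..<s + Suc n}. \<eta> t) = S + \<eta> (s + n)" unfolding S_def by simp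
  have IH1: "\<forall>i\<in>V. p (s + n) i \<le> S" using Suc unfolding S_def by blast
  have IH2: "\<forall>i\<in>reach j0 s n. p (s + n) i \<le> S - \<theta>\<^sub>0 ^ n * D" using Suc unfolding S_def by blast
  have pr: "p (s + Suc n) i = (\<Sum>j\<in>V. w (s + n) i j * p (s + n) j) + \<epsilon> (s + n) i" if "i \<in> V" for i
    using rec that by simp
  have A: "\<forall>i\<in>V. p (s + Suc n) i \<le> S + \<eta> (s + n)"
  proof
    fix i assume i: "i \<in> V"
    have "(\<Sum>j\<in>V. w (s + n) i j * p (s + n) j) \<le> (\<Sum>j\<in>V. w (s + n) i j * S)"
      using IH1 i by (intro sum_w_le) auto
    also have "\<dots> = S" using sum_w_const[OF i] .
    finally show "p (s + Suc n) i \<le> S + \<eta> (s + n)" using pr[OF i] eb i by (smt (verit))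
  qed
  have Bn: "\<forall>i\<in>reach j0 s (Suc n). p (s + Suc n) i \<le> S + \<eta> (s + n) - \<theta>\<^sub>0 ^ Suc n * D"
  proof
    fix i assume iR: "i \<in> reach j0 s (Suc n)"
    have iV: "i \<in> V" using iR reach_sub[OF j0] by blast
    obtain a where a: "a \<in> reach j0 s n" "w (s + n) i a \<ge> \<theta>\<^sub>0"
    proof (cases "i \<in> reach j0 s n")
      case True then show ?thesis using that w_diag[OF iV] by blast
    next
      case False
      then obtain a where "a \<in> reach j0 s n" "(a, i) \<in> E (s + n)" using iR by auto
      then show ?thesis using that w_edge by blast
    qed
    have aV: "a \<in> V" using a(1) reach_sub[OF j0] by blast
    define b where "b j = S - (if j = a then \<theta>\<^sub>0 ^ n * D else 0)" for j
    have "(\<Sum>j\<in>V. w (s + n) i j * p (s + n) j) \<le> (\<Sum>j\<in>V. w (s + n) i j * b j)"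
      using IH1 IH2 a(1) iV unfolding b_def by (intro sum_w_le) auto
    also have "\<dots> = (\<Sum>j\<in>V. w (s + n) i j * S) - (\<Sum>j\<in>V. w (s + n) i j * (if j = a then \<theta>\<^sub>0 ^ n * D else 0))"
      unfolding b_def by (simp add: right_diff_distrib sum_subtractf)
    also have "(\<Sum>j\<in>V. w (s + n) i j * (if j = a then \<theta>\<^sub>0 ^ n * D else 0)) = (\<Sum>j\<in>V. if j = a then w (s + n) i a * (\<theta>\<^sub>0 ^ n * D) else 0)"
      by (rule sum.cong) auto
    also have "\<dots> = w (s + n) i a * (\<theta>\<^sub>0 ^ n * D)" using aV V_fin by simp
    also have "(\<Sum>j\<in>V. w (s + n) i j * S) = S" using sum_w_const[OF iV] .
    finally have 1: "(\<Sum>j\<in>V. w (s + n) i j * p (s + n) j) \<le> S - w (s + n) i a * (\<theta>\<^sub>0 ^ n * D)" .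
    have "\<theta>\<^sub>0 * (\<theta>\<^sub>0 ^ n * D) \<le> w (s + n) i a * (\<theta>\<^sub>0 ^ n * D)"
      using a(2) D vt_range by (intro mult_right_mono) auto
    then have "\<theta>\<^sub>0 ^ Suc n * D \<le> w (s + n) i a * (\<theta>\<^sub>0 ^ n * D)" by (simp add: mult.assoc)
    then show "p (s + Suc n) i \<le> S + \<eta> (s + n) - \<theta>\<^sub>0 ^ Suc n * D"
      using 1 pr[OF iV] eb iV by (smt (verit))
  qed
  show ?case unfolding S1 using A Bn by blast
qed

lemma eta_nonneg:
  assumes eb: "\<forall>t. \<forall>i\<in>V. norm (e t i :: 'a::real_normed_vector) \<le> \<eta> t"
  shows "\<eta> t \<ge> 0"
proof -
  have "(1::nat) \<in> V" using I_pos by simp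
  then have "norm (e t 1) \<le> \<eta> t" using eb by blast
  then show ?thesis by (rule order.trans[OF norm_ge_zero])
qed

lemma cons_gen:
  fixes u e :: "nat \<Rightarrow> nat \<Rightarrow> 'a::euclidean_space"
  assumes rec: "\<forall>t. \<forall>i\<in>V. u (Suc t) i = (\<Sum>j\<in>V. w t i j *\<^sub>R u t j) + e t i"
    and eb: "\<forall>t. \<forall>i\<in>V. norm (e t i) \<le> \<eta> t"
    and i1: "i1 \<in> V" and i2: "i2 \<in> V"
    and reachH: "(\<forall>j0\<in>V. i1 \<in> reach j0 s n) \<and> \<gamma> = \<theta>\<^sub>0 ^ n \<or> \<gamma> = 0"
  shows "norm (u (s + n) i1 - u (s + n) i2) \<le> (1 - \<gamma>) * dm V (u s) + 2 * (\<Sum>t\<in>{s..<s + n}. \<eta> t)"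
proof -
  let ?T = "s + n" and ?S = "\<Sum>t\<in>{s..<s + n}. \<eta> t" and ?D = "dm V (u s)"
  have D0: "?D \<ge> 0" using dm_nonneg[OF V_fin V_ne] .
  have S0: "?S \<ge> 0" using eta_nonneg[OF eb] by (intro sum_nonneg) auto
  have th: "\<gamma> \<le> 1" using vt_range reachH by (auto intro: power_le_one)
  show ?thesis
  proof (cases "u ?T i1 = u ?T i2")
    case True
    then show ?thesis using D0 S0 th by simp
  next
    case False
    define d where "d = u ?T i1 - u ?T i2"
    have dn: "norm d > 0" using False d_def by simp
    define v where "v = (1 / norm d) *\<^sub>R d"
    have nv: "norm v = 1" using dn v_def by simp
    define p where "p t i = v \<bullet> u t i" for t i
    define \<epsilon> where "\<epsilon> t i = v \<bullet> e t i" for t i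
    have recp: "\<forall>t. \<forall>i\<in>V. p (Suc t) i = (\<Sum>j\<in>V. w t i j * p t j) + \<epsilon> t i"
      using rec unfolding p_def \<epsilon>_def by (simp add: inner_add_right inner_sum_right)
    have ebp: "\<forall>t. \<forall>i\<in>V. \<epsilon> t i \<le> \<eta> t"
    proof (intro allI ballI)
      fix t i assume "i \<in> V"
      have "\<epsilon> t i \<le> norm v * norm (e t i)" unfolding \<epsilon>_def by (rule norm_cauchy_schwarz)
      moreover have "norm (e t i) \<le> \<eta> t" using eb \<open>i \<in> V\<close> by blast
      ultimately show "\<epsilon> t i \<le> \<eta> t" using nv by simp
    qed
    have recq: "\<forall>t. \<forall>i\<in>V. (- p (Suc t) i) = (\<Sum>j\<in>V. w t i j * (- p t j)) + (- \<epsilon> t i)"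
      using recp by (simp add: sum_negf)
    have ebq: "\<forall>t. \<forall>i\<in>V. - \<epsilon> t i \<le> \<eta> t"
    proof (intro allI ballI)
      fix t i assume "i \<in> V"
      have "- \<epsilon> t i = (- v) \<bullet> e t i" unfolding \<epsilon>_def by simp
      also have "\<dots> \<le> norm (- v) * norm (e t i)" by (rule norm_cauchy_schwarz)
      finally have "- \<epsilon> t i \<le> norm (- v) * norm (e t i)" .
      moreover have "norm (e t i) \<le> \<eta> t" using eb \<open>i \<in> V\<close> by blast
      ultimately show "- \<epsilon> t i \<le> \<eta> t" using nv by simp
    qed
    have "finite (p s ` V)" "p s ` V \<noteq> {}" using V_fin V_ne by auto
    then have "Min (p s ` V) \<in> p s ` V" by (rule Min_in)
    then obtain j0 where j0: "j0 \<in> V" "p s j0 = Min (p s ` V)" by (metis imageE)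
    have j0min: "\<forall>i\<in>V. p s j0 \<le> p s i"
    proof
      fix i assume "i \<in> V"
      then have "Min (p s ` V) \<le> p s i" using V_fin by simp
      then show "p s j0 \<le> p s i" using j0(2) by simp
    qed
    have upp: "\<forall>i\<in>V. p s i \<le> p s j0 + ?D"
    proof
      fix i assume i: "i \<in> V"
      have "p s i - p s j0 = v \<bullet> (u s i - u s j0)" unfolding p_def by (simp add: inner_diff_right)
      also have "\<dots> \<le> norm v * norm (u s i - u s j0)" by (rule norm_cauchy_schwarz)
      also have "\<dots> \<le> ?D" using nv dm_ge[OF V_fin i j0(1)] by simp
      finally show "p s i \<le> p s j0 + ?D" by simp
    qed
    have lw: "p s j0 \<le> (p s j0 + ?D) - ?D" by simp
    have U1: "p ?T i1 \<le> (p s j0 + ?D) + ?S - \<gamma> * ?D"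
    proof (cases "\<gamma> = 0")
      case True then show ?thesis using scal_upper[OF recp ebp j0(1) upp lw D0, of n] i1 by simp
    next
      case False
      then have "i1 \<in> reach j0 s n" "\<gamma> = \<theta>\<^sub>0 ^ n" using reachH j0(1) by auto
      then show ?thesis using scal_upper[OF recp ebp j0(1) upp lw D0, of n] by blast
    qed
    have upq: "\<forall>i\<in>V. - p s i \<le> - p s j0" using j0min by auto
    have lwq: "- p s j0 \<le> - p s j0 - 0" by simp
    have U2: "- p ?T i2 \<le> - p s j0 + ?S"
      using scal_upper[OF recq ebq j0(1) upq lwq order.refl, of n] i2 by blast
    have "p ?T i1 - p ?T i2 = v \<bullet> d" unfolding p_def d_def by (simp add: inner_diff_right)
    also have "\<dots> = norm d" using dn unfolding v_def by (simp add: dot_square_norm power2_eq_square)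
    finally have "norm d = p ?T i1 - p ?T i2" by simp
    then have "norm d \<le> (1 - \<gamma>) * ?D + 2 * ?S" using U1 U2 by (simp add: algebra_simps)
    then show ?thesis unfolding d_def .
  qed
qed

lemma cons_block:
  fixes u e :: "nat \<Rightarrow> nat \<Rightarrow> 'a::euclidean_space"
  assumes rec: "\<forall>t. \<forall>i\<in>V. u (Suc t) i = (\<Sum>j\<in>V. w t i j *\<^sub>R u t j) + e t i"
    and eb: "\<forall>t. \<forall>i\<in>V. norm (e t i) \<le> \<eta> t"
  shows "dm V (u (k * B + I * B)) \<le> (1 - \<theta>\<^sub>0 ^ (I * B)) * dm V (u (k * B)) + 2 * (\<Sum>t\<in>{k * B..<k * B + I * B}. \<eta> t)"
proof (rule dm_le[OF V_fin V_ne])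
  fix i j assume ij: "i \<in> V" "j \<in> V"
  have "(\<forall>j0\<in>V. i \<in> reach j0 (k * B) (I * B)) \<and> \<theta>\<^sub>0 ^ (I * B) = \<theta>\<^sub>0 ^ (I * B) \<or> \<theta>\<^sub>0 ^ (I * B) = 0"
    using reach_full ij by blast
  then show "norm (u (k * B + I * B) i - u (k * B + I * B) j) \<le> (1 - \<theta>\<^sub>0 ^ (I * B)) * dm V (u (k * B)) + 2 * (\<Sum>t\<in>{k * B..<k * B + I * B}. \<eta> t)"
    by (rule cons_gen[OF rec eb ij])
qed

lemma cons_step:
  fixes u e :: "nat \<Rightarrow> nat \<Rightarrow> 'a::euclidean_space"
  assumes rec: "\<forall>t. \<forall>i\<in>V. u (Suc t) i = (\<Sum>j\<in>V. w t i j *\<^sub>R u t j) + e t i"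
    and eb: "\<forall>t. \<forall>i\<in>V. norm (e t i) \<le> \<eta> t"
  shows "dm V (u (Suc t)) \<le> dm V (u t) + 2 * \<eta> t"
proof (rule dm_le[OF V_fin V_ne])
  fix i j assume ij: "i \<in> V" "j \<in> V"
  have "norm (u (t + 1) i - u (t + 1) j) \<le> (1 - 0) * dm V (u t) + 2 * (\<Sum>t\<in>{t..<t + 1}. \<eta> t)"
    by (rule cons_gen[OF rec eb ij]) simp
  then show "norm (u (Suc t) i - u (Suc t) j) \<le> dm V (u t) + 2 * \<eta> t" by simp
qed

end

locale nxt = netw I E \<theta> \<theta>\<^sub>0 B for I E \<theta> \<theta>\<^sub>0 B +
  fixes K :: "'a::euclidean_space set"
    and f :: "nat \<Rightarrow> 'a \<Rightarrow> real" and gf :: "nat \<Rightarrow> 'a \<Rightarrow> 'a"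
    and G :: "'a \<Rightarrow> real"
    and ft :: "nat \<Rightarrow> 'a \<Rightarrow> 'a \<Rightarrow> real" and gft :: "nat \<Rightarrow> 'a \<Rightarrow> 'a \<Rightarrow> 'a"
    and \<tau> :: "nat \<Rightarrow> real" and \<alpha> :: "nat \<Rightarrow> real"
    and x xt z y pit :: "nat \<Rightarrow> nat \<Rightarrow> 'a"
    and LL LS LF LG :: real and S :: "'a set"
  assumes A1: "K \<noteq> {}" "closed K" "convex K"
    and Sopen: "open S" "K \<subseteq> S"
    and fder: "\<forall>i\<in>{1..I}. \<forall>u\<in>S. (f i has_derivative (\<lambda>h. gf i u \<bullet> h)) (at u)"
    and LLip: "\<forall>i\<in>{1..I}. lipschitz_on LL K (gf i)"
    and LFb: "\<forall>u\<in>K. norm (\<Sum>i\<in>{1..I}. gf i u) \<le> LF"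
    and Gconv: "convex_on UNIV G" and LGb: "\<forall>u\<in>K. \<forall>\<xi>\<in>subdiff G u. norm \<xi> \<le> LG"
    and A6: "coercive_on K (\<lambda>u. (\<Sum>i\<in>{1..I}. f i u) + G u)"
    and F_diff: "\<forall>i\<in>{1..I}. \<forall>v\<in>K. \<forall>u\<in>K.
               ((\<lambda>w. ft i w v) has_derivative (\<lambda>h. gft i u v \<bullet> h)) (at u within K)"
    and F1: "\<forall>i\<in>{1..I}. \<tau> i > 0 \<and> (\<forall>v\<in>K. strongly_convex_on K (\<tau> i) (\<lambda>w. ft i w v))"
    and F2: "\<forall>i\<in>{1..I}. \<forall>u\<in>K. gft i u u = gf i u"
    and LSLip: "\<forall>i\<in>{1..I}. \<forall>u\<in>K. lipschitz_on LS K (\<lambda>v. gft i u v)"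
    and step: "\<forall>n. 0 < \<alpha> n \<and> \<alpha> n \<le> 1" "\<not> summable \<alpha>" "summable (\<lambda>n. (\<alpha> n)\<^sup>2)"
    and init: "\<forall>i\<in>{1..I}. x 0 i \<in> K \<and> y 0 i = gf i (x 0 i)"
    and pit_def: "\<forall>n. \<forall>i\<in>{1..I}. pit n i = real I *\<^sub>R y n i - gf i (x n i)"
    and xt_def: "\<forall>n. \<forall>i\<in>{1..I}. xt n i \<in> K \<and>
               (\<forall>w\<in>K. ft i (xt n i) (x n i) + pit n i \<bullet> (xt n i - x n i) + G (xt n i)
                       \<le> ft i w (x n i) + pit n i \<bullet> (w - x n i) + G w)"
    and z_def: "\<forall>n. \<forall>i\<in>{1..I}. z n i = x n i + \<alpha> n *\<^sub>R (xt n i - x n i)"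
    and x_upd: "\<forall>n. \<forall>i\<in>{1..I}. x (Suc n) i = (\<Sum>j\<in>{1..I}. weight E \<theta> n i j *\<^sub>R z n j)"
    and y_upd: "\<forall>n. \<forall>i\<in>{1..I}. y (Suc n) i =
               (\<Sum>j\<in>{1..I}. weight E \<theta> n i j *\<^sub>R y n j) + gf i (x (Suc n) i) - gf i (x n i)"
begin

definition "xb n = (1 / real I) *\<^sub>R (\<Sum>i\<in>V. x n i)"
definition "F u = (\<Sum>i\<in>V. f i u)"
definition "gF u = (\<Sum>i\<in>V. gf i u)"
definition "dd n j = norm (xt n j - x n j)"
definition "Mx n = Max (dd n ` V)"
definition "dx n = dm V (x n)"
definition "dy n = dm V (y n)"
definition "\<tau>m = Min (\<tau> ` V)"

lemma one_V: "1 \<in> V" using I_pos by simp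
lemma I_real: "real I \<ge> 1" using I_pos by simp

lemma \<tau>m_pos: "\<tau>m > 0"
  unfolding \<tau>m_def using V_fin V_ne F1 by (subst Min_gr_iff) auto

lemma \<tau>m_le: "j \<in> V \<Longrightarrow> \<tau>m \<le> \<tau> j"
  unfolding \<tau>m_def using V_fin by simp

lemma \<alpha>_pos: "\<alpha> n > 0" and \<alpha>_le1: "\<alpha> n \<le> 1" using step(1) by auto

lemma LL_nonneg: "LL \<ge> 0" using LLip one_V lipschitz_on_nonneg by blast

lemma gf_lip: "i \<in> V \<Longrightarrow> u \<in> K \<Longrightarrow> v \<in> K \<Longrightarrow> norm (gf i u - gf i v) \<le> LL * norm (u - v)"
  using LLip lipschitz_on_normD by blast

lemma dd_le_Mx: "j \<in> V \<Longrightarrow> dd n j \<le> Mx n"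
  unfolding Mx_def using V_fin by simp

lemma dd_nonneg: "dd n j \<ge> 0" unfolding dd_def by simp

lemma Mx_nonneg: "Mx n \<ge> 0" using dd_le_Mx[OF one_V, of n] dd_nonneg[of n 1] by simp

lemma dx_nonneg: "dx n \<ge> 0" and dy_nonneg: "dy n \<ge> 0"
  unfolding dx_def dy_def using dm_nonneg[OF V_fin V_ne] by auto

lemma zK_of_xK: "i \<in> V \<Longrightarrow> x n i \<in> K \<Longrightarrow> z n i \<in> K"
proof -
  assume i: "i \<in> V" and xK: "x n i \<in> K"
  have "z n i = (1 - \<alpha> n) *\<^sub>R x n i + \<alpha> n *\<^sub>R xt n i" using z_def i by (simp add: algebra_simps)
  then show ?thesis using convexD[OF A1(3) xK, of "xt n i" "1 - \<alpha> n" "\<alpha> n"] xt_def i \<alpha>_pos \<alpha>_le1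
    by (simp add: less_imp_le)
qed

lemma xK: "i \<in> V \<Longrightarrow> x n i \<in> K"
proof (induction n arbitrary: i)
  case 0 then show ?case using init by simp
next
  case (Suc n)
  have "x (Suc n) i = (\<Sum>j\<in>V. w n i j *\<^sub>R z n j)" using x_upd Suc.prems by simp
  moreover have "(\<Sum>j\<in>V. w n i j *\<^sub>R z n j) \<in> K"
    using Suc w_nonneg[OF Suc.prems] w_row[OF Suc.prems] zK_of_xK
    by (intro convex_sum[OF V_fin A1(3)]) auto
  ultimately show ?case by simp
qed

lemma zK: "i \<in> V \<Longrightarrow> z n i \<in> K" using zK_of_xK xK by blast

lemma xtK: "i \<in> V \<Longrightarrow> xt n i \<in> K" using xt_def by blast

lemma xbK: "xb n \<in> K"
proof -
  have "(\<Sum>i\<in>V. (1 / real I) *\<^sub>R x n i) \<in> K"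
    using xK I_pos by (intro convex_sum[OF V_fin A1(3)]) (auto simp: V_card)
  then show ?thesis unfolding xb_def by (simp add: scaleR_sum_right)
qed

lemma sum_swap_w:
  fixes u :: "nat \<Rightarrow> 'b::real_vector"
  shows "(\<Sum>i\<in>V. (\<Sum>j\<in>V. w n i j *\<^sub>R u j)) = (\<Sum>j\<in>V. u j)"
proof -
  have "(\<Sum>i\<in>V. (\<Sum>j\<in>V. w n i j *\<^sub>R u j)) = (\<Sum>j\<in>V. (\<Sum>i\<in>V. w n i j) *\<^sub>R u j)"
    by (subst sum.swap) (simp add: scaleR_sum_left)
  also have "\<dots> = (\<Sum>j\<in>V. u j)" using w_col by simp
  finally show ?thesis .
qed

lemma sum_x_Suc: "(\<Sum>i\<in>V. x (Suc n) i) = (\<Sum>j\<in>V. z n j)"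
  using x_upd sum_swap_w by simp

lemma sum_y: "(\<Sum>i\<in>V. y n i) = (\<Sum>i\<in>V. gf i (x n i))"
proof (induction n)
  case 0 then show ?case using init by simp
next
  case (Suc n)
  have "(\<Sum>i\<in>V. y (Suc n) i) = (\<Sum>i\<in>V. (\<Sum>j\<in>V. w n i j *\<^sub>R y n j) + gf i (x (Suc n) i) - gf i (x n i))"
    using y_upd by simp
  also have "\<dots> = (\<Sum>i\<in>V. (\<Sum>j\<in>V. w n i j *\<^sub>R y n j)) + (\<Sum>i\<in>V. gf i (x (Suc n) i)) - (\<Sum>i\<in>V. gf i (x n i))"
    by (simp add: sum.distrib sum_subtractf)
  also have "\<dots> = (\<Sum>i\<in>V. gf i (x (Suc n) i))" using sum_swap_w[of n "y n"] Suc by simp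
  finally show ?case .
qed

lemma xb_Suc: "xb (Suc n) = xb n + \<alpha> n *\<^sub>R ((1 / real I) *\<^sub>R (\<Sum>j\<in>V. xt n j - x n j))"
proof -
  have "(\<Sum>j\<in>V. z n j) = (\<Sum>j\<in>V. x n j) + \<alpha> n *\<^sub>R (\<Sum>j\<in>V. xt n j - x n j)"
    using z_def by (simp add: sum.distrib scaleR_sum_right)
  then show ?thesis unfolding xb_def sum_x_Suc by (simp add: algebra_simps)
qed

end

context nxt
begin

definition "eps n = real I * dy n + real I * LL * dx n"
definition "A0 = 2 * (LG + LF) / \<tau>m"
definition "A1 = 2 * real I * (1 + LL) / \<tau>m"

lemma LF_nonneg: "LF \<ge> 0"
proof -
  obtain u where "u \<in> K" using A1 by auto
  then have "norm (\<Sum>i\<in>V. gf i u) \<le> LF" using LFb by blast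
  then show ?thesis by (rule order.trans[OF norm_ge_zero])
qed

lemma LG_nonneg: "LG \<ge> 0"
proof -
  obtain u where u: "u \<in> K" using A1 by auto
  obtain \<xi> where "\<xi> \<in> subdiff G u" using subgrad_exists[OF Gconv] by blast
  then have "norm \<xi> \<le> LG" using LGb u by blast
  then show ?thesis by (rule order.trans[OF norm_ge_zero])
qed

lemma eps_nonneg: "eps n \<ge> 0"
  unfolding eps_def using dx_nonneg dy_nonneg LL_nonneg by simp

lemma G_lip: "u \<in> K \<Longrightarrow> v \<in> K \<Longrightarrow> G u - G v \<le> LG * norm (u - v)"
proof -
  assume u: "u \<in> K" and v: "v \<in> K"
  obtain \<xi> where xi: "\<xi> \<in> subdiff G u" using subgrad_exists[OF Gconv] by blast
  have "G v \<ge> G u + \<xi> \<bullet> (v - u)" using xi unfolding subdiff_def by blast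
  then have "G u - G v \<le> \<xi> \<bullet> (u - v)" by (simp add: inner_diff_right)
  also have "\<dots> \<le> norm \<xi> * norm (u - v)" by (rule norm_cauchy_schwarz)
  also have "\<dots> \<le> LG * norm (u - v)" using LGb u xi by (intro mult_right_mono) auto
  finally show ?thesis .
qed

lemma key:
  assumes j: "j \<in> V"
  shows "G (xt n j) - G (x n j) \<le> - (\<tau> j / 2) * (dd n j)\<^sup>2 - (real I *\<^sub>R y n j) \<bullet> (xt n j - x n j)"
proof -
  let ?v = "x n j" and ?u = "xt n j"
  define \<phi> where "\<phi> w = ft j w ?v + pit n j \<bullet> (w - ?v) + G w" for w
  have vK: "?v \<in> K" using xK[OF j] .
  have uK: "?u \<in> K" using xtK[OF j] .
  have sc0: "strongly_convex_on K (\<tau> j) (\<lambda>w. ft j w ?v)" using F1 j vK by blast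
  have sc: "strongly_convex_on K (\<tau> j) \<phi>" unfolding \<phi>_def by (rule sc_comb[OF sc0 Gconv])
  have opt: "\<forall>w\<in>K. \<phi> ?u \<le> \<phi> w" unfolding \<phi>_def using xt_def j by blast
  have 1: "\<phi> ?v - \<phi> ?u \<ge> \<tau> j / 2 * (norm (?v - ?u))\<^sup>2" by (rule sc_argmin[OF sc A1(3) uK vK opt])
  have der: "((\<lambda>w. ft j w ?v) has_derivative (\<lambda>h. gf j ?v \<bullet> h)) (at ?v within K)"
  proof -
    have "((\<lambda>w. ft j w ?v) has_derivative (\<lambda>h. gft j ?v ?v \<bullet> h)) (at ?v within K)"
      using F_diff j vK by blast
    moreover have "gft j ?v ?v = gf j ?v" using F2 j vK by blast
    ultimately show ?thesis by simp
  qed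
  have 2: "ft j ?u ?v \<ge> ft j ?v ?v + gf j ?v \<bullet> (?u - ?v) + \<tau> j / 2 * (norm (?u - ?v))\<^sup>2"
    by (rule fosc[OF sc0 der A1(3) vK uK])
  have tj: "\<tau> j > 0" using F1 j by blast
  have 3: "ft j ?u ?v \<ge> ft j ?v ?v + gf j ?v \<bullet> (?u - ?v)" 
  proof -
    have "\<tau> j / 2 * (norm (?u - ?v))\<^sup>2 \<ge> 0" using tj by simp
    then show ?thesis using 2 by linarith
  qed
  have pe: "pit n j + gf j ?v = real I *\<^sub>R y n j" using pit_def j by simp
  have nrm: "norm (?v - ?u) = dd n j" unfolding dd_def by (simp add: norm_minus_commute)
  have "G ?v - G ?u \<ge> \<tau> j / 2 * (dd n j)\<^sup>2 + (pit n j + gf j ?v) \<bullet> (?u - ?v)"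
    using 1 3 nrm unfolding \<phi>_def by (simp add: inner_add_left algebra_simps)
  then show ?thesis using pe by simp
qed

lemma gF_y:
  assumes j: "j \<in> V"
  shows "norm (gF (xb n) - real I *\<^sub>R y n j) \<le> eps n"
proof -
  have cI: "real I > 0" using I_pos by simp
  have sy: "(\<Sum>k\<in>V. y n k) = (\<Sum>k\<in>V. gf k (x n k))" by (rule sum_y)
  have e1: "real I *\<^sub>R y n j - (\<Sum>k\<in>V. gf k (x n k)) = real I *\<^sub>R (y n j - (1 / real I) *\<^sub>R (\<Sum>k\<in>V. y n k))"
    using cI sy by (simp add: algebra_simps)
  have "norm (y n j - (1 / real I) *\<^sub>R (\<Sum>k\<in>V. y n k)) \<le> dy n"
    using mean_dev[OF V_fin _ j, of "y n"] V_card I_pos unfolding dy_def by simp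
  then have n1: "norm (real I *\<^sub>R y n j - (\<Sum>k\<in>V. gf k (x n k))) \<le> real I * dy n"
    unfolding e1 using cI by (simp add: mult_left_mono)
  have "norm ((\<Sum>k\<in>V. gf k (x n k)) - gF (xb n)) = norm (\<Sum>k\<in>V. gf k (x n k) - gf k (xb n))"
    unfolding gF_def by (simp add: sum_subtractf)
  also have "\<dots> \<le> (\<Sum>k\<in>V. norm (gf k (x n k) - gf k (xb n)))" by (rule norm_sum)
  also have "\<dots> \<le> (\<Sum>k\<in>V. LL * dx n)"
  proof (rule sum_mono)
    fix k assume k: "k \<in> V"
    have "norm (gf k (x n k) - gf k (xb n)) \<le> LL * norm (x n k - xb n)" using gf_lip[OF k xK[OF k] xbK] .
    also have "\<dots> \<le> LL * dx n"
      using mean_dev[OF V_fin _ k, of "x n"] V_card I_pos LL_nonneg unfolding dx_def xb_def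
      by (intro mult_left_mono) auto
    finally show "norm (gf k (x n k) - gf k (xb n)) \<le> LL * dx n" .
  qed
  also have "\<dots> = real I * LL * dx n" using V_card by simp
  finally have n2: "norm ((\<Sum>k\<in>V. gf k (x n k)) - gF (xb n)) \<le> real I * LL * dx n" .
  have "gF (xb n) - real I *\<^sub>R y n j = - (real I *\<^sub>R y n j - (\<Sum>k\<in>V. gf k (x n k))) - ((\<Sum>k\<in>V. gf k (x n k)) - gF (xb n))"
    by simp
  then have "norm (gF (xb n) - real I *\<^sub>R y n j) \<le> norm (real I *\<^sub>R y n j - (\<Sum>k\<in>V. gf k (x n k))) + norm ((\<Sum>k\<in>V. gf k (x n k)) - gF (xb n))"
    by (metis norm_minus_cancel norm_triangle_ineq4)
  then show ?thesis using n1 n2 unfolding eps_def by simp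
qed

lemma Iy_bound:
  assumes j: "j \<in> V"
  shows "norm (real I *\<^sub>R y n j) \<le> LF + eps n"
proof -
  have "norm (gF (xb n)) \<le> LF" using LFb xbK unfolding gF_def by blast
  moreover have "norm (real I *\<^sub>R y n j) \<le> norm (gF (xb n)) + norm (gF (xb n) - real I *\<^sub>R y n j)"
    by (metis norm_minus_commute norm_triangle_sub)
  ultimately show ?thesis using gF_y[OF j, of n] by simp
qed

lemma dd_bound:
  assumes j: "j \<in> V"
  shows "dd n j \<le> 2 * (LG + LF + eps n) / \<tau>m"
proof -
  let ?d = "dd n j"
  have tj: "\<tau> j > 0" using F1 j by blast
  have k: "G (xt n j) - G (x n j) \<le> - (\<tau> j / 2) * ?d\<^sup>2 - (real I *\<^sub>R y n j) \<bullet> (xt n j - x n j)"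
    by (rule key[OF j])
  have gl: "G (x n j) - G (xt n j) \<le> LG * ?d"
    using G_lip[OF xK[OF j] xtK[OF j]] unfolding dd_def by (simp add: norm_minus_commute)
  have ip: "- ((real I *\<^sub>R y n j) \<bullet> (xt n j - x n j)) \<le> (LF + eps n) * ?d"
  proof -
    have "- ((real I *\<^sub>R y n j) \<bullet> (xt n j - x n j)) \<le> norm (real I *\<^sub>R y n j) * norm (xt n j - x n j)"
      by (metis abs_ge_minus_self Cauchy_Schwarz_ineq2 order.trans)
    also have "\<dots> \<le> (LF + eps n) * ?d" unfolding dd_def using Iy_bound[OF j] by (intro mult_right_mono) auto
    finally show ?thesis .
  qed
  have "\<tau> j / 2 * ?d\<^sup>2 \<le> (LG + LF + eps n) * ?d" using k gl ip by (simp add: algebra_simps)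
  then have A: "\<tau> j / 2 * ?d * ?d \<le> (LG + LF + eps n) * ?d" by (simp add: power2_eq_square mult.assoc)
  have B: "\<tau> j / 2 * ?d \<le> LG + LF + eps n"
  proof (cases "?d = 0")
    case True then show ?thesis using LG_nonneg LF_nonneg eps_nonneg by simp
  next
    case False then have "?d > 0" using dd_nonneg[of n j] by simp
    then show ?thesis using A by (simp add: mult_le_cancel_right_pos)
  qed
  have "\<tau>m / 2 * ?d \<le> \<tau> j / 2 * ?d" using \<tau>m_le[OF j] dd_nonneg[of n j] by (intro mult_right_mono) auto
  then have "\<tau>m / 2 * ?d \<le> LG + LF + eps n" using B by simp
  then show ?thesis using \<tau>m_pos by (simp add: field_simps)
qed

lemma Mx_bound: "Mx n \<le> A0 + A1 * (dx n + dy n)"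
proof -
  have e: "eps n \<le> real I * (1 + LL) * (dx n + dy n)"
    unfolding eps_def using dx_nonneg[of n] dy_nonneg[of n] LL_nonneg I_real
    by (simp add: algebra_simps mult_nonneg_nonneg)
  have "Mx n \<le> 2 * (LG + LF + eps n) / \<tau>m"
    unfolding Mx_def using V_fin V_ne dd_bound by (subst Max_le_iff) auto
  also have "\<dots> \<le> 2 * (LG + LF + real I * (1 + LL) * (dx n + dy n)) / \<tau>m"
    using e \<tau>m_pos by (intro divide_right_mono) auto
  also have "\<dots> = A0 + A1 * (dx n + dy n)" unfolding A0_def A1_def by (simp add: add_divide_distrib[symmetric] algebra_simps)
  finally show ?thesis .
qed

lemma A0_nonneg: "A0 \<ge> 0" unfolding A0_def using LG_nonneg LF_nonneg \<tau>m_pos by simp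
lemma A1_nonneg: "A1 \<ge> 0" unfolding A1_def using LL_nonneg \<tau>m_pos by simp

end

context nxt
begin

definition "ex t i = \<alpha> t *\<^sub>R (\<Sum>j\<in>V. w t i j *\<^sub>R (xt t j - x t j))"
definition "ey t i = gf i (x (Suc t) i) - gf i (x t i)"

lemma sum_w_norm:
  fixes u :: "nat \<Rightarrow> 'b::real_normed_vector"
  assumes i: "i \<in> V" and b: "\<And>j. j \<in> V \<Longrightarrow> norm (u j) \<le> c"
  shows "norm (\<Sum>j\<in>V. w t i j *\<^sub>R u j) \<le> c"
proof -
  have "norm (\<Sum>j\<in>V. w t i j *\<^sub>R u j) \<le> (\<Sum>j\<in>V. norm (w t i j *\<^sub>R u j))" by (rule norm_sum)
  also have "\<dots> = (\<Sum>j\<in>V. w t i j * norm (u j))" using w_nonneg[OF i] by (intro sum.cong) auto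
  also have "\<dots> \<le> (\<Sum>j\<in>V. w t i j * c)" by (rule sum_w_le[OF i b])
  also have "\<dots> = c" by (rule sum_w_const[OF i])
  finally show ?thesis .
qed

lemma x_rec: "\<forall>t. \<forall>i\<in>V. x (Suc t) i = (\<Sum>j\<in>V. w t i j *\<^sub>R x t j) + ex t i"
proof (intro allI ballI)
  fix t i assume i: "i \<in> V"
  have "x (Suc t) i = (\<Sum>j\<in>V. w t i j *\<^sub>R (x t j + \<alpha> t *\<^sub>R (xt t j - x t j)))"
    using x_upd z_def i by simp
  also have "\<dots> = (\<Sum>j\<in>V. w t i j *\<^sub>R x t j) + ex t i"
    unfolding ex_def by (simp add: scaleR_add_right sum.distrib scaleR_sum_right mult.commute)
  finally show "x (Suc t) i = (\<Sum>j\<in>V. w t i j *\<^sub>R x t j) + ex t i" .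
qed

lemma ex_bound: "\<forall>t. \<forall>i\<in>V. norm (ex t i) \<le> \<alpha> t * Mx t"
proof (intro allI ballI)
  fix t i assume i: "i \<in> V"
  have "norm (\<Sum>j\<in>V. w t i j *\<^sub>R (xt t j - x t j)) \<le> Mx t"
    by (rule sum_w_norm[OF i]) (use dd_le_Mx in \<open>auto simp: dd_def\<close>)
  then show "norm (ex t i) \<le> \<alpha> t * Mx t" unfolding ex_def using \<alpha>_pos[of t]
    by (simp add: mult_left_mono)
qed

lemma x_move: "i \<in> V \<Longrightarrow> norm (x (Suc t) i - x t i) \<le> dx t + \<alpha> t * Mx t"
proof -
  assume i: "i \<in> V"
  have "x (Suc t) i - x t i = (\<Sum>j\<in>V. w t i j *\<^sub>R x t j) - (\<Sum>j\<in>V. w t i j) *\<^sub>R x t i + ex t i"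
    using x_rec w_row[OF i] i by simp
  also have "\<dots> = (\<Sum>j\<in>V. w t i j *\<^sub>R (x t j - x t i)) + ex t i"
    by (simp add: scaleR_diff_right sum_subtractf scaleR_sum_left)
  finally have eq: "x (Suc t) i - x t i = (\<Sum>j\<in>V. w t i j *\<^sub>R (x t j - x t i)) + ex t i" .
  have "norm (\<Sum>j\<in>V. w t i j *\<^sub>R (x t j - x t i)) \<le> dx t"
    by (rule sum_w_norm[OF i]) (use dm_ge[OF V_fin _ i] in \<open>auto simp: dx_def\<close>)
  then show ?thesis unfolding eq using ex_bound i by (smt (verit) norm_triangle_ineq)
qed

lemma y_rec: "\<forall>t. \<forall>i\<in>V. y (Suc t) i = (\<Sum>j\<in>V. w t i j *\<^sub>R y t j) + ey t i"
  using y_upd unfolding ey_def by simp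

lemma ey_bound: "\<forall>t. \<forall>i\<in>V. norm (ey t i) \<le> LL * (dx t + \<alpha> t * Mx t)"
proof (intro allI ballI)
  fix t i assume i: "i \<in> V"
  have "norm (ey t i) \<le> LL * norm (x (Suc t) i - x t i)" unfolding ey_def by (rule gf_lip[OF i xK[OF i] xK[OF i]])
  also have "\<dots> \<le> LL * (dx t + \<alpha> t * Mx t)" using x_move[OF i] LL_nonneg by (rule mult_left_mono)
  finally show "norm (ey t i) \<le> LL * (dx t + \<alpha> t * Mx t)" .
qed

lemma dx_step: "dx (Suc t) \<le> dx t + 2 * (\<alpha> t * Mx t)"
  unfolding dx_def by (rule cons_step[OF x_rec ex_bound])

lemma dy_step: "dy (Suc t) \<le> dy t + 2 * (LL * (dx t + \<alpha> t * Mx t))"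
  unfolding dy_def by (rule cons_step[OF y_rec ey_bound])

lemma dx_block: "dx (k * B + I * B) \<le> (1 - \<theta>\<^sub>0 ^ (I * B)) * dx (k * B) + 2 * (\<Sum>t\<in>{k * B..<k * B + I * B}. \<alpha> t * Mx t)"
  unfolding dx_def by (rule cons_block[OF x_rec ex_bound])

lemma dy_block: "dy (k * B + I * B) \<le> (1 - \<theta>\<^sub>0 ^ (I * B)) * dy (k * B) + 2 * (\<Sum>t\<in>{k * B..<k * B + I * B}. LL * (dx t + \<alpha> t * Mx t))"
  unfolding dy_def by (rule cons_block[OF y_rec ey_bound])

end

lemma sq_lemma:
  fixes \<rho> a b :: real
  assumes "0 \<le> \<rho>" "\<rho> < 1" "a \<ge> 0" "b \<ge> 0"
  shows "(\<rho> * a + b)\<^sup>2 \<le> \<rho> * a\<^sup>2 + b\<^sup>2 / (1 - \<rho>)"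
proof -
  have pos: "1 - \<rho> > 0" using assms by simp
  have "(1 - \<rho>) * (\<rho> * a\<^sup>2 + b\<^sup>2 / (1 - \<rho>) - (\<rho> * a + b)\<^sup>2) = \<rho> * ((1 - \<rho>) * a - b)\<^sup>2"
    using pos by (simp add: field_simps power2_eq_square)
  also have "\<dots> \<ge> 0" using assms by simp
  finally have "(1 - \<rho>) * (\<rho> * a\<^sup>2 + b\<^sup>2 / (1 - \<rho>) - (\<rho> * a + b)\<^sup>2) \<ge> 0" .
  then have "\<rho> * a\<^sup>2 + b\<^sup>2 / (1 - \<rho>) - (\<rho> * a + b)\<^sup>2 \<ge> 0" using pos by (simp add: zero_le_mult_iff)
  then show ?thesis by simp
qed

lemma block_abs:
  fixes X Y a :: "nat \<Rightarrow> real"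
  assumes X0: "\<And>k. X k \<ge> 0" and Y0: "\<And>k. Y k \<ge> 0" and a0: "\<And>k. a k \<ge> 0"
    and \<gamma>: "0 < \<gamma>" "\<gamma> \<le> 1" and c: "c \<ge> 0" and c': "c' \<ge> 0"
    and rX: "\<And>k. X (Suc k) \<le> (1 - \<gamma>) * X k + c * a k * (1 + X k + Y k)"
    and rY: "\<And>k. Y (Suc k) \<le> (1 - \<gamma>) * Y k + c' * X k + c * a k * (1 + X k + Y k)"
    and alim: "a \<longlonglongrightarrow> 0" and sa: "summable (\<lambda>k. (a k)\<^sup>2)"
  shows "summable (\<lambda>k. (X k + Y k)\<^sup>2)"
proof -
  define \<mu> where "\<mu> = \<gamma> / (2 * c' + 2)"
  have \<mu>: "0 < \<mu>" "\<mu> \<le> 1 / 2" "\<mu> * c' \<le> \<gamma> / 2"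
    using \<gamma> c' unfolding \<mu>_def by (auto simp: field_simps)
  define V where "V k = X k + \<mu> * Y k" for k
  have V0: "V k \<ge> 0" for k using X0 Y0 \<mu> unfolding V_def by simp
  have XY: "X k + Y k \<le> V k / \<mu>" for k
  proof -
    have "\<mu> * (X k + Y k) \<le> V k" unfolding V_def using \<mu> X0[of k] by (simp add: algebra_simps mult_left_le_one_le)
    then show ?thesis using \<mu> by (simp add: field_simps)
  qed
  have rV: "V (Suc k) \<le> (1 - \<gamma> / 2) * V k + 2 * c * a k * (1 + V k / \<mu>)" for k
  proof -
    have t1: "(1 - \<gamma>) * X k + \<mu> * (c' * X k) \<le> (1 - \<gamma> / 2) * X k"
    proof -
      have "(\<mu> * c') * X k \<le> (\<gamma> / 2) * X k" using \<mu>(3) X0[of k] by (rule mult_right_mono)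
      then show ?thesis by (simp add: algebra_simps)
    qed
    have t2: "\<mu> * ((1 - \<gamma>) * Y k) \<le> (1 - \<gamma> / 2) * (\<mu> * Y k)"
      using \<mu> Y0[of k] \<gamma> by (simp add: algebra_simps mult_nonneg_nonneg)
    have cr: "c * a k * (1 + X k + Y k) \<ge> 0" using c a0 X0 Y0 by simp
    have t3: "c * a k * (1 + X k + Y k) + \<mu> * (c * a k * (1 + X k + Y k)) \<le> 2 * c * a k * (1 + V k / \<mu>)"
    proof -
      have "c * a k * (1 + X k + Y k) + \<mu> * (c * a k * (1 + X k + Y k)) \<le> 2 * (c * a k * (1 + X k + Y k))"
      proof -
        have "\<mu> * (c * a k * (1 + X k + Y k)) \<le> 1 * (c * a k * (1 + X k + Y k))"
          using \<mu> cr by (intro mult_right_mono) auto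
        then show ?thesis by simp
      qed
      also have "\<dots> \<le> 2 * (c * a k * (1 + V k / \<mu>))"
        using XY[of k] c a0[of k] by (intro mult_left_mono) (auto intro!: mult_nonneg_nonneg)
      finally show ?thesis by simp
    qed
    have "V (Suc k) \<le> ((1 - \<gamma>) * X k + c * a k * (1 + X k + Y k)) + \<mu> * ((1 - \<gamma>) * Y k + c' * X k + c * a k * (1 + X k + Y k))"
    proof -
      have "\<mu> * Y (Suc k) \<le> \<mu> * ((1 - \<gamma>) * Y k + c' * X k + c * a k * (1 + X k + Y k))"
        using rY[of k] \<mu>(1) by (intro mult_left_mono) auto
      then show ?thesis unfolding V_def using rX[of k] by linarith
    qed
    also have "\<dots> = ((1 - \<gamma>) * X k + \<mu> * (c' * X k)) + \<mu> * ((1 - \<gamma>) * Y k) + (c * a k * (1 + X k + Y k) + \<mu> * (c * a k * (1 + X k + Y k)))"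
      by (simp add: algebra_simps)
    also have "\<dots> \<le> (1 - \<gamma> / 2) * X k + (1 - \<gamma> / 2) * (\<mu> * Y k) + 2 * c * a k * (1 + V k / \<mu>)"
      using t1 t2 t3 by linarith
    also have "\<dots> = (1 - \<gamma> / 2) * V k + 2 * c * a k * (1 + V k / \<mu>)" unfolding V_def by (simp add: algebra_simps)
    finally show ?thesis .
  qed
  define a' where "a' = \<gamma> * \<mu> / (8 * c + 1)"
  have a'pos: "a' > 0" unfolding a'_def using \<gamma> \<mu> c by simp
  obtain k0 where k0: "\<And>k. k \<ge> k0 \<Longrightarrow> a k \<le> a'"
  proof -
    obtain N where N: "\<forall>n\<ge>N. norm (a n - 0) < a'" using LIMSEQ_D[OF alim a'pos] by blast
    have "a k \<le> a'" if "k \<ge> N" for k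
    proof -
      have "norm (a k - 0) < a'" using N that by blast
      then show ?thesis by simp
    qed
    then show ?thesis using that by blast
  qed
  define \<rho> where "\<rho> = 1 - \<gamma> / 4"
  have \<rho>: "0 \<le> \<rho>" "\<rho> < 1" unfolding \<rho>_def using \<gamma> by auto
  have rV2: "V (Suc k) \<le> \<rho> * V k + 2 * c * a k" if k: "k \<ge> k0" for k
  proof -
    have "2 * c * a k / \<mu> \<le> \<gamma> / 4"
    proof -
      have "2 * c * a k \<le> 2 * c * a'" using k0[OF k] c by (intro mult_left_mono) auto
      also have "2 * c * a' \<le> \<gamma> * \<mu> / 4" unfolding a'_def using \<gamma> \<mu> c by (simp add: field_simps)
      finally show ?thesis using \<mu> by (simp add: field_simps)
    qed
    then have "(2 * c * a k / \<mu>) * V k \<le> \<gamma> / 4 * V k" using V0[of k] by (rule mult_right_mono)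
    then have "2 * c * a k * (V k / \<mu>) \<le> \<gamma> / 4 * V k" by simp
    moreover have "2 * c * a k * (1 + V k / \<mu>) = 2 * c * a k + 2 * c * a k * (V k / \<mu>)" by (simp add: distrib_left)
    moreover have "(1 - \<gamma> / 2) * V k = V k - \<gamma> / 2 * V k" "\<rho> * V k = V k - \<gamma> / 4 * V k"
      unfolding \<rho>_def by (simp_all add: algebra_simps)
    moreover have "\<gamma> / 4 * V k \<le> \<gamma> / 2 * V k" using V0[of k] \<gamma> by (intro mult_right_mono) auto
    ultimately show ?thesis using rV[of k] by linarith
  qed
  have recsq: "(V (Suc k))\<^sup>2 \<le> \<rho> * (V k)\<^sup>2 + (2 * c)\<^sup>2 / (1 - \<rho>) * (a k)\<^sup>2" if k: "k \<ge> k0" for k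
  proof -
    have "(V (Suc k))\<^sup>2 \<le> (\<rho> * V k + 2 * c * a k)\<^sup>2"
      using rV2[OF k] V0[of "Suc k"] by (intro power_mono) auto
    also have "\<dots> \<le> \<rho> * (V k)\<^sup>2 + (2 * c * a k)\<^sup>2 / (1 - \<rho>)"
      using \<rho> V0[of k] c a0[of k] by (intro sq_lemma) auto
    finally show ?thesis by (simp add: power_mult_distrib)
  qed
  have sb: "summable (\<lambda>k. (2 * c)\<^sup>2 / (1 - \<rho>) * (a k)\<^sup>2)" using sa by (rule summable_mult)
  have "summable (\<lambda>k. (V k)\<^sup>2)"
    by (rule summable_rec[OF _ _ sb \<rho> recsq]) (use \<rho> in auto)
  then have sV: "summable (\<lambda>k. (1 / \<mu>)\<^sup>2 * (V k)\<^sup>2)" by (rule summable_mult)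
  show ?thesis
  proof (rule summable_comparison_test'[OF sV])
    fix k :: nat assume "k \<ge> 0"
    have "X k + Y k \<le> (1 / \<mu>) * V k" using XY[of k] by simp
    then have "(X k + Y k)\<^sup>2 \<le> ((1 / \<mu>) * V k)\<^sup>2" using X0[of k] Y0[of k] by (intro power_mono) auto
    then show "norm ((X k + Y k)\<^sup>2) \<le> (1 / \<mu>)\<^sup>2 * (V k)\<^sup>2" by (simp add: power_divide)
  qed
qed

lemma LIMSEQ_div:
  fixes g :: "nat \<Rightarrow> real"
  assumes "g \<longlonglongrightarrow> 0" "P > 0"
  shows "(\<lambda>n. g (n div P)) \<longlonglongrightarrow> 0"
proof (rule LIMSEQ_I)
  fix r :: real assume "r > 0"
  then obtain N where N: "\<forall>n\<ge>N. norm (g n - 0) < r" using LIMSEQ_D[OF assms(1)] by blast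
  have "\<forall>n\<ge>N * P. norm (g (n div P) - 0) < r"
  proof (intro allI impI)
    fix n assume "n \<ge> N * P"
    then have "N * P div P \<le> n div P" by (rule div_le_mono)
    then have "n div P \<ge> N" using assms(2) by simp
    then show "norm (g (n div P) - 0) < r" using N by blast
  qed
  then show "\<exists>no. \<forall>n\<ge>no. norm (g (n div P) - 0) < r" by blast
qed

context nxt
begin

definition "Pb = I * B"
definition "\<gamma> = \<theta>\<^sub>0 ^ (I * B)"
definition "blk k = {k * Pb..<k * Pb + Pb}"
definition "ah k = Max (\<alpha> ` blk k)"
definition "Q n = dx n + dy n"
definition "c1 = 1 + 2 * LL + 2 * (1 + LL) * A1"
definition "c2 = 2 * (1 + LL) * A0"
definition "K1 = c1 ^ Pb * (1 + real Pb * c2)"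
definition "Mb k = A0 + A1 * K1 * (Q (k * Pb) + ah k)"
definition "Xs k = dx (k * Pb)"
definition "Ys k = dy (k * Pb)"
definition "Cm = A0 + A1 * K1"

lemma Pb_pos: "Pb > 0" unfolding Pb_def using I_pos B1 by simp

lemma blk_fin: "finite (blk k)" and blk_ne: "blk k \<noteq> {}"
  unfolding blk_def using Pb_pos by auto

lemma mem_blk: "m < Pb \<Longrightarrow> k * Pb + m \<in> blk k" unfolding blk_def by simp

lemma ah_ge: "t \<in> blk k \<Longrightarrow> \<alpha> t \<le> ah k"
  unfolding ah_def using blk_fin by simp

lemma ah_in: "\<exists>t\<in>blk k. ah k = \<alpha> t"
proof -
  have "ah k \<in> \<alpha> ` blk k" unfolding ah_def using blk_fin blk_ne by (intro Max_in) auto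
  then show ?thesis by auto
qed

lemma ah_pos: "ah k > 0" and ah_le1: "ah k \<le> 1"
  using ah_in[of k] \<alpha>_pos \<alpha>_le1 by auto

lemma ah_sq: "(ah k)\<^sup>2 \<le> (\<Sum>t\<in>blk k. (\<alpha> t)\<^sup>2)"
proof -
  obtain t where t: "t \<in> blk k" "ah k = \<alpha> t" using ah_in by blast
  have "(\<alpha> t)\<^sup>2 \<le> (\<Sum>t\<in>blk k. (\<alpha> t)\<^sup>2)" using t(1) blk_fin by (intro member_le_sum) auto
  then show ?thesis using t(2) by simp
qed

lemma sum_ah2: "summable (\<lambda>k. (ah k)\<^sup>2)"
proof -
  have "summable (\<lambda>k. \<Sum>n\<in>{k * Pb..<k * Pb + Pb}. (\<alpha> n)\<^sup>2)"
    using sums_group[OF summable_sums[OF step(3)] Pb_pos] by (rule sums_summable)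
  then show ?thesis
    by (rule summable_comparison_test'[where N = 0]) (use ah_sq in \<open>auto simp: blk_def\<close>)
qed

lemma ah_lim: "ah \<longlonglongrightarrow> 0"
proof -
  have "(\<lambda>k. (ah k)\<^sup>2) \<longlonglongrightarrow> 0" by (rule summable_LIMSEQ_zero[OF sum_ah2])
  then have "(\<lambda>k. sqrt ((ah k)\<^sup>2)) \<longlonglongrightarrow> sqrt 0" by (rule tendsto_real_sqrt)
  then show ?thesis using ah_pos by (simp add: less_imp_le)
qed

lemma \<alpha>_lim: "\<alpha> \<longlonglongrightarrow> 0"
proof -
  have "(\<lambda>k. (\<alpha> k)\<^sup>2) \<longlonglongrightarrow> 0" by (rule summable_LIMSEQ_zero[OF step(3)])
  then have "(\<lambda>k. sqrt ((\<alpha> k)\<^sup>2)) \<longlonglongrightarrow> sqrt 0" by (rule tendsto_real_sqrt)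
  then show ?thesis using \<alpha>_pos by (simp add: less_imp_le)
qed

lemma Q_nonneg: "Q n \<ge> 0" unfolding Q_def using dx_nonneg dy_nonneg by (simp add: add_nonneg_nonneg)

lemma c1_ge1: "c1 \<ge> 1" unfolding c1_def using LL_nonneg A1_nonneg by simp
lemma c2_nonneg: "c2 \<ge> 0" unfolding c2_def using LL_nonneg A0_nonneg by simp
lemma K1_nonneg: "K1 \<ge> 0" unfolding K1_def using c1_ge1 c2_nonneg by simp

lemma Q_step: "Q (Suc t) \<le> c1 * Q t + c2 * \<alpha> t"
proof -
  have aM: "\<alpha> t * Mx t \<le> \<alpha> t * A0 + A1 * Q t"
  proof -
    have "\<alpha> t * Mx t \<le> \<alpha> t * (A0 + A1 * Q t)" using Mx_bound[of t] \<alpha>_pos[of t] unfolding Q_def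
      by (intro mult_left_mono) auto
    also have "\<dots> = \<alpha> t * A0 + \<alpha> t * (A1 * Q t)" by (simp add: algebra_simps)
    also have "\<alpha> t * (A1 * Q t) \<le> 1 * (A1 * Q t)"
      using \<alpha>_le1[of t] A1_nonneg Q_nonneg[of t] by (intro mult_right_mono) auto
    finally show ?thesis by simp
  qed
  have dxQ: "dx t \<le> Q t" unfolding Q_def using dy_nonneg by simp
  have "Q (Suc t) \<le> Q t + 2 * (\<alpha> t * Mx t) + 2 * (LL * (dx t + \<alpha> t * Mx t))"
    unfolding Q_def using dx_step[of t] dy_step[of t] by simp
  also have "\<dots> = Q t + 2 * LL * dx t + 2 * (1 + LL) * (\<alpha> t * Mx t)" by (simp add: algebra_simps)
  also have "\<dots> \<le> Q t + 2 * LL * Q t + 2 * (1 + LL) * (\<alpha> t * A0 + A1 * Q t)"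
    using aM dxQ LL_nonneg by (intro add_mono mult_left_mono) auto
  also have "\<dots> = c1 * Q t + c2 * \<alpha> t" unfolding c1_def c2_def by (simp add: algebra_simps)
  finally show ?thesis .
qed

lemma Q_in: "m \<le> Pb \<Longrightarrow> Q (k * Pb + m) \<le> c1 ^ m * (Q (k * Pb) + real m * c2 * ah k)"
proof (induction m)
  case 0 then show ?case by simp
next
  case (Suc m)
  have m: "m < Pb" "m \<le> Pb" using Suc.prems by auto
  have at: "\<alpha> (k * Pb + m) \<le> ah k" by (rule ah_ge[OF mem_blk[OF m(1)]])
  have IH: "Q (k * Pb + m) \<le> c1 ^ m * (Q (k * Pb) + real m * c2 * ah k)" using Suc.IH m(2) .
  have "Q (k * Pb + Suc m) \<le> c1 * Q (k * Pb + m) + c2 * \<alpha> (k * Pb + m)" using Q_step by simp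
  also have "\<dots> \<le> c1 * (c1 ^ m * (Q (k * Pb) + real m * c2 * ah k)) + c2 * ah k"
    using IH at c1_ge1 c2_nonneg by (intro add_mono mult_left_mono) auto
  also have "c2 * ah k \<le> c1 ^ Suc m * (c2 * ah k)"
  proof -
    have "1 \<le> c1 ^ Suc m" using c1_ge1 by (rule one_le_power)
    moreover have "c2 * ah k \<ge> 0" using c2_nonneg ah_pos[of k] by simp
    ultimately have "1 * (c2 * ah k) \<le> c1 ^ Suc m * (c2 * ah k)" by (rule mult_right_mono)
    then show ?thesis by simp
  qed
  finally show ?case by (simp add: algebra_simps)
qed

lemma Q_in2: "m \<le> Pb \<Longrightarrow> Q (k * Pb + m) \<le> K1 * (Q (k * Pb) + ah k)"
proof -
  assume m: "m \<le> Pb"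
  have 1: "c1 ^ m \<le> c1 ^ Pb" using m c1_ge1 by (rule power_increasing)
  have 2: "Q (k * Pb) + real m * c2 * ah k \<le> (1 + real Pb * c2) * (Q (k * Pb) + ah k)"
  proof -
    have "real m * c2 * ah k \<le> real Pb * c2 * ah k" using m c2_nonneg ah_pos[of k]
      by (intro mult_right_mono) (auto simp: less_imp_le)
    moreover have "real Pb * c2 * Q (k * Pb) \<ge> 0" using c2_nonneg Q_nonneg by simp
    moreover have "ah k \<ge> 0" using ah_pos[of k] by simp
    moreover have "(1 + real Pb * c2) * (Q (k * Pb) + ah k) = Q (k * Pb) + ah k + real Pb * c2 * Q (k * Pb) + real Pb * c2 * ah k"
      by (simp add: algebra_simps)
    ultimately show ?thesis by linarith
  qed
  have "Q (k * Pb + m) \<le> c1 ^ m * (Q (k * Pb) + real m * c2 * ah k)" by (rule Q_in[OF m])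
  also have "\<dots> \<le> c1 ^ Pb * ((1 + real Pb * c2) * (Q (k * Pb) + ah k))"
    using 1 2 c1_ge1 c2_nonneg Q_nonneg ah_pos[of k]
    by (intro mult_mono) (auto intro!: add_nonneg_nonneg mult_nonneg_nonneg simp: less_imp_le)
  finally show ?thesis unfolding K1_def by (simp add: mult.assoc)
qed

lemma Mx_in: "m \<le> Pb \<Longrightarrow> Mx (k * Pb + m) \<le> Mb k"
proof -
  assume m: "m \<le> Pb"
  have "Mx (k * Pb + m) \<le> A0 + A1 * Q (k * Pb + m)" using Mx_bound unfolding Q_def by simp
  also have "\<dots> \<le> A0 + A1 * (K1 * (Q (k * Pb) + ah k))" using Q_in2[OF m] A1_nonneg by (intro add_left_mono mult_left_mono) auto
  finally show ?thesis unfolding Mb_def by (simp add: mult.assoc)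
qed

lemma dx_in: "m \<le> Pb \<Longrightarrow> dx (k * Pb + m) \<le> dx (k * Pb) + 2 * real m * ah k * Mb k"
proof (induction m)
  case 0 then show ?case by simp
next
  case (Suc m)
  have m: "m < Pb" "m \<le> Pb" using Suc.prems by auto
  have at: "\<alpha> (k * Pb + m) \<le> ah k" by (rule ah_ge[OF mem_blk[OF m(1)]])
  have "\<alpha> (k * Pb + m) * Mx (k * Pb + m) \<le> ah k * Mb k"
    using at Mx_in[OF m(2)] \<alpha>_pos Mx_nonneg ah_pos[of k] by (intro mult_mono) (auto simp: less_imp_le)
  then show ?case using dx_step[of "k * Pb + m"] Suc.IH[OF m(2)] by (simp add: algebra_simps)
qed

end

context nxt
begin

definition "cc = 2 * real Pb * Cm * (1 + LL * (2 * real Pb + 1))"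
definition "cc' = 2 * real Pb * LL"

lemma Cm_nonneg: "Cm \<ge> 0" unfolding Cm_def using A0_nonneg A1_nonneg K1_nonneg by simp

lemma \<gamma>_range: "0 < \<gamma>" "\<gamma> \<le> 1"
  unfolding \<gamma>_def using vt_range by (auto intro: power_le_one)

lemma blk_eq: "t \<in> blk k \<Longrightarrow> t = k * Pb + (t - k * Pb) \<and> t - k * Pb < Pb"
  unfolding blk_def by auto

lemma Mx_blk: "t \<in> blk k \<Longrightarrow> Mx t \<le> Mb k"
  using Mx_in[of "t - k * Pb" k] blk_eq[of t k] by (metis less_imp_le)

lemma dx_blk: "t \<in> blk k \<Longrightarrow> dx t \<le> Xs k + 2 * real Pb * ah k * Mb k"
proof -
  assume t: "t \<in> blk k"
  let ?m = "t - k * Pb"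
  have m: "?m \<le> Pb" "t = k * Pb + ?m" using blk_eq[OF t] by auto
  have Mb0: "Mb k \<ge> 0" using Mx_blk[OF t] Mx_nonneg[of t] by simp
  have 1: "dx t \<le> dx (k * Pb) + 2 * real ?m * ah k * Mb k" using dx_in[OF m(1), of k] m(2) by simp
  have 2: "real ?m * (ah k * Mb k) \<le> real Pb * (ah k * Mb k)"
    using m(1) ah_pos[of k] Mb0 by (intro mult_right_mono) auto
  have 3: "2 * real ?m * ah k * Mb k = 2 * (real ?m * (ah k * Mb k))" "2 * real Pb * ah k * Mb k = 2 * (real Pb * (ah k * Mb k))"
    by simp_all
  show ?thesis unfolding Xs_def using 1 2 3 by linarith
qed

lemma aMx_blk: "t \<in> blk k \<Longrightarrow> \<alpha> t * Mx t \<le> ah k * Mb k"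
  using ah_ge[of t k] Mx_blk[of t k] \<alpha>_pos[of t] Mx_nonneg[of t] by (intro mult_mono) auto

lemma card_blk: "card (blk k) = Pb" unfolding blk_def by simp

lemma blk_B: "{k * I * B..<k * I * B + I * B} = blk k" unfolding blk_def Pb_def by (simp add: mult.assoc)

lemma e12: "k * I * B + I * B = Suc k * Pb" "k * I * B = k * Pb" unfolding Pb_def by (simp_all add: algebra_simps)

lemma X_rec: "Xs (Suc k) \<le> (1 - \<gamma>) * Xs k + 2 * real Pb * (ah k * Mb k)"
proof -
  have "dx (Suc k * Pb) \<le> (1 - \<gamma>) * dx (k * Pb) + 2 * (\<Sum>t\<in>blk k. \<alpha> t * Mx t)"
    using dx_block[of "k * I", unfolded blk_B, unfolded e12(1), unfolded e12(2)] unfolding \<gamma>_def .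
  moreover have "(\<Sum>t\<in>blk k. \<alpha> t * Mx t) \<le> (\<Sum>t\<in>blk k. ah k * Mb k)" by (rule sum_mono) (rule aMx_blk)
  moreover have "(\<Sum>t\<in>blk k. ah k * Mb k) = real Pb * (ah k * Mb k)" by (simp add: card_blk)
  ultimately show ?thesis unfolding Xs_def by linarith
qed

lemma Y_rec: "Ys (Suc k) \<le> (1 - \<gamma>) * Ys k + 2 * real Pb * LL * (Xs k + (2 * real Pb + 1) * (ah k * Mb k))"
proof -
  have "dy (Suc k * Pb) \<le> (1 - \<gamma>) * dy (k * Pb) + 2 * (\<Sum>t\<in>blk k. LL * (dx t + \<alpha> t * Mx t))"
    using dy_block[of "k * I", unfolded blk_B, unfolded e12(1), unfolded e12(2)] unfolding \<gamma>_def .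
  moreover have "(\<Sum>t\<in>blk k. LL * (dx t + \<alpha> t * Mx t)) \<le> (\<Sum>t\<in>blk k. LL * (Xs k + (2 * real Pb + 1) * (ah k * Mb k)))"
  proof (rule sum_mono)
    fix t assume t: "t \<in> blk k"
    have "dx t + \<alpha> t * Mx t \<le> Xs k + 2 * real Pb * ah k * Mb k + ah k * Mb k"
      using dx_blk[OF t] aMx_blk[OF t] by simp
    also have "\<dots> = Xs k + (2 * real Pb + 1) * (ah k * Mb k)" by (simp add: algebra_simps)
    finally show "LL * (dx t + \<alpha> t * Mx t) \<le> LL * (Xs k + (2 * real Pb + 1) * (ah k * Mb k))"
      using LL_nonneg by (rule mult_left_mono)
  qed
  moreover have "(\<Sum>t\<in>blk k. LL * (Xs k + (2 * real Pb + 1) * (ah k * Mb k))) = real Pb * (LL * (Xs k + (2 * real Pb + 1) * (ah k * Mb k)))"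
    by (simp add: card_blk)
  moreover have "2 * (real Pb * (LL * (Xs k + (2 * real Pb + 1) * (ah k * Mb k)))) = 2 * real Pb * LL * (Xs k + (2 * real Pb + 1) * (ah k * Mb k))"
    by simp
  ultimately show ?thesis unfolding Ys_def by linarith
qed

lemma Xs_nonneg: "Xs k \<ge> 0" and Ys_nonneg: "Ys k \<ge> 0"
  unfolding Xs_def Ys_def using dx_nonneg dy_nonneg by auto

lemma aMb: "ah k * Mb k \<le> Cm * (ah k * (1 + Xs k + Ys k))"
proof -
  have Q: "Q (k * Pb) = Xs k + Ys k" unfolding Q_def Xs_def Ys_def by simp
  have "Mb k = A0 + A1 * K1 * (Xs k + Ys k + ah k)" unfolding Mb_def Q by simp
  also have "\<dots> \<le> A0 * (1 + Xs k + Ys k) + A1 * K1 * (1 + Xs k + Ys k)"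
  proof -
    have "A0 \<le> A0 * (1 + Xs k + Ys k)" using A0_nonneg Xs_nonneg[of k] Ys_nonneg[of k]
      by (simp add: algebra_simps mult_nonneg_nonneg)
    moreover have "A1 * K1 * (Xs k + Ys k + ah k) \<le> A1 * K1 * (1 + Xs k + Ys k)"
      using ah_le1[of k] A1_nonneg K1_nonneg by (intro mult_left_mono) auto
    ultimately show ?thesis by simp
  qed
  also have "\<dots> = Cm * (1 + Xs k + Ys k)" unfolding Cm_def by (simp add: algebra_simps)
  finally have "Mb k \<le> Cm * (1 + Xs k + Ys k)" .
  then have "ah k * Mb k \<le> ah k * (Cm * (1 + Xs k + Ys k))" using ah_pos[of k] by (intro mult_left_mono) auto
  then show ?thesis by (simp add: algebra_simps)
qed

lemma XY_summ: "summable (\<lambda>k. (Xs k + Ys k)\<^sup>2)"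
proof (rule block_abs[OF Xs_nonneg Ys_nonneg _ \<gamma>_range])
  show "\<And>k. 0 \<le> ah k" using ah_pos by (simp add: less_imp_le)
  show "0 \<le> cc" unfolding cc_def using Cm_nonneg LL_nonneg by simp
  show "0 \<le> cc'" unfolding cc'_def using LL_nonneg by simp
  show "ah \<longlonglongrightarrow> 0" by (rule ah_lim)
  show "summable (\<lambda>k. (ah k)\<^sup>2)" by (rule sum_ah2)
  fix k
  define W where "W = ah k * (1 + Xs k + Ys k)"
  have W0: "W \<ge> 0" unfolding W_def using ah_pos[of k] Xs_nonneg[of k] Ys_nonneg[of k] by simp
  have am: "ah k * Mb k \<le> Cm * W" unfolding W_def by (rule aMb)
  have ccW: "cc * ah k * (1 + Xs k + Ys k) = cc * W" unfolding W_def by (simp only: mult.assoc)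
  have "2 * real Pb * (ah k * Mb k) \<le> 2 * real Pb * (Cm * W)" using am by (intro mult_left_mono) auto
  also have "\<dots> \<le> cc * W"
  proof -
    have "2 * real Pb * Cm * 1 \<le> 2 * real Pb * Cm * (1 + LL * (2 * real Pb + 1))"
      using Cm_nonneg LL_nonneg by (intro mult_left_mono) auto
    then have "2 * real Pb * Cm \<le> cc" unfolding cc_def by simp
    then have "2 * real Pb * Cm * W \<le> cc * W" using W0 by (rule mult_right_mono)
    then show ?thesis by (simp add: mult.assoc)
  qed
  finally show "Xs (Suc k) \<le> (1 - \<gamma>) * Xs k + cc * ah k * (1 + Xs k + Ys k)" using X_rec[of k] ccW by linarith
  have "2 * real Pb * LL * ((2 * real Pb + 1) * (ah k * Mb k)) \<le> 2 * real Pb * LL * ((2 * real Pb + 1) * (Cm * W))"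
    using am LL_nonneg by (intro mult_left_mono) auto
  also have "\<dots> \<le> cc * W"
  proof -
    have "2 * real Pb * LL * ((2 * real Pb + 1) * Cm) \<le> cc"
      unfolding cc_def using Cm_nonneg LL_nonneg by (simp add: algebra_simps mult_nonneg_nonneg)
    then have "2 * real Pb * LL * ((2 * real Pb + 1) * Cm) * W \<le> cc * W" using W0 by (rule mult_right_mono)
    then show ?thesis by (simp add: algebra_simps)
  qed
  finally have "2 * real Pb * LL * ((2 * real Pb + 1) * (ah k * Mb k)) \<le> cc * W" .
  then show "Ys (Suc k) \<le> (1 - \<gamma>) * Ys k + cc' * Xs k + cc * ah k * (1 + Xs k + Ys k)"
  proof -
    have "2 * real Pb * LL * (Xs k + (2 * real Pb + 1) * (ah k * Mb k)) = cc' * Xs k + 2 * real Pb * LL * ((2 * real Pb + 1) * (ah k * Mb k))"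
      unfolding cc'_def by (simp add: algebra_simps)
    then show ?thesis using Y_rec[of k] ccW \<open>2 * real Pb * LL * ((2 * real Pb + 1) * (ah k * Mb k)) \<le> cc * W\<close> by linarith
  qed
qed

end

context nxt
begin

lemma XY_nonneg: "Xs k + Ys k \<ge> 0" using Xs_nonneg Ys_nonneg by (simp add: add_nonneg_nonneg)

lemma XY_lim: "(\<lambda>k. Xs k + Ys k) \<longlonglongrightarrow> 0"
proof -
  have "(\<lambda>k. (Xs k + Ys k)\<^sup>2) \<longlonglongrightarrow> 0" by (rule summable_LIMSEQ_zero[OF XY_summ])
  then have "(\<lambda>k. sqrt ((Xs k + Ys k)\<^sup>2)) \<longlonglongrightarrow> sqrt 0" by (rule tendsto_real_sqrt)
  then show ?thesis using XY_nonneg by simp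
qed

lemma XY_bdd: "\<exists>Qb. \<forall>k. Xs k + Ys k \<le> Qb"
proof -
  have "Bseq (\<lambda>k. Xs k + Ys k)" using XY_lim by (intro convergent_imp_Bseq convergentI)
  then obtain Kb where Kb: "\<forall>k. norm (Xs k + Ys k) \<le> Kb" unfolding Bseq_def by blast
  have "\<forall>k. Xs k + Ys k \<le> Kb"
  proof
    fix k have "Xs k + Ys k \<le> norm (Xs k + Ys k)" by simp
    then show "Xs k + Ys k \<le> Kb" using Kb by (meson order_trans)
  qed
  then show ?thesis by blast
qed

lemma Q_div: "Q n \<le> K1 * ((Xs (n div Pb) + Ys (n div Pb)) + ah (n div Pb))"
proof -
  have n: "n = (n div Pb) * Pb + n mod Pb" using mod_div_mult_eq[of n Pb] by simp
  have m: "n mod Pb \<le> Pb" using Pb_pos by (simp add: less_imp_le)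
  have "Q ((n div Pb) * Pb + n mod Pb) \<le> K1 * (Q ((n div Pb) * Pb) + ah (n div Pb))" by (rule Q_in2[OF m])
  then show ?thesis using n unfolding Q_def Xs_def Ys_def by simp
qed

definition "Qmax = K1 * ((SOME Qb. \<forall>k. Xs k + Ys k \<le> Qb) + 1)"

lemma Q_bdd: "Q n \<le> Qmax"
proof -
  define Qb where "Qb = (SOME Qb. \<forall>k. Xs k + Ys k \<le> Qb)"
  have Qb: "\<forall>k. Xs k + Ys k \<le> Qb" unfolding Qb_def using XY_bdd by (rule someI_ex)
  have "Q n \<le> K1 * ((Xs (n div Pb) + Ys (n div Pb)) + ah (n div Pb))" by (rule Q_div)
  also have "\<dots> \<le> K1 * (Qb + 1)" using Qb ah_le1 K1_nonneg by (intro mult_left_mono add_mono) auto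
  finally show ?thesis unfolding Qmax_def Qb_def .
qed

lemma Qmax_nonneg: "Qmax \<ge> 0" using Q_bdd[of 0] Q_nonneg[of 0] by simp

lemma Q_lim: "Q \<longlonglongrightarrow> 0"
proof (rule tendsto_sandwich[where f = "\<lambda>n. 0" and h = "\<lambda>n. K1 * ((Xs (n div Pb) + Ys (n div Pb)) + ah (n div Pb))"])
  show "\<forall>\<^sub>F n in sequentially. 0 \<le> Q n" using Q_nonneg by simp
  show "\<forall>\<^sub>F n in sequentially. Q n \<le> K1 * ((Xs (n div Pb) + Ys (n div Pb)) + ah (n div Pb))" using Q_div by simp
  show "(\<lambda>n. 0) \<longlonglongrightarrow> (0::real)" by simp
  have "(\<lambda>k. (Xs k + Ys k) + ah k) \<longlonglongrightarrow> 0 + 0" using XY_lim ah_lim by (rule tendsto_add)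
  then have "(\<lambda>k. (Xs k + Ys k) + ah k) \<longlonglongrightarrow> 0" by simp
  then have "(\<lambda>n. (Xs (n div Pb) + Ys (n div Pb)) + ah (n div Pb)) \<longlonglongrightarrow> 0" using Pb_pos by (rule LIMSEQ_div)
  then have "(\<lambda>n. K1 * ((Xs (n div Pb) + Ys (n div Pb)) + ah (n div Pb))) \<longlonglongrightarrow> K1 * 0" by (rule tendsto_mult_left)
  then show "(\<lambda>n. K1 * ((Xs (n div Pb) + Ys (n div Pb)) + ah (n div Pb))) \<longlonglongrightarrow> 0" by simp
qed

lemma dx_lim: "dx \<longlonglongrightarrow> 0"
proof (rule tendsto_sandwich[where f = "\<lambda>n. 0" and h = Q])
  show "\<forall>\<^sub>F n in sequentially. 0 \<le> dx n" using dx_nonneg by simp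
  show "\<forall>\<^sub>F n in sequentially. dx n \<le> Q n" unfolding Q_def using dy_nonneg by simp
qed (auto simp: Q_lim)

definition "Mbnd = A0 + A1 * Qmax"

lemma Mx_bdd: "Mx n \<le> Mbnd"
proof -
  have "Mx n \<le> A0 + A1 * Q n" using Mx_bound unfolding Q_def by simp
  also have "\<dots> \<le> A0 + A1 * Qmax" using Q_bdd A1_nonneg by (intro add_left_mono mult_left_mono) auto
  finally show ?thesis unfolding Mbnd_def .
qed

lemma Mbnd_nonneg: "Mbnd \<ge> 0" using Mx_bdd[of 0] Mx_nonneg[of 0] by simp

lemma sum_aQ: "summable (\<lambda>n. \<alpha> n * Q n)"
proof (rule summable_block[OF _ _ Pb_pos])
  define \<beta> where "\<beta> k = K1 * ((ah k)\<^sup>2 + ((ah k)\<^sup>2 + (Xs k + Ys k)\<^sup>2) / 2)" for k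
  show "\<And>n. 0 \<le> \<alpha> n * Q n" using \<alpha>_pos Q_nonneg by (simp add: less_imp_le)
  show "summable \<beta>" unfolding \<beta>_def
    by (intro summable_mult summable_add summable_divide sum_ah2 XY_summ)
  fix n
  let ?k = "n div Pb"
  have nb: "n \<in> blk ?k"
  proof -
    have e: "?k * Pb + n mod Pb = n" using mod_div_mult_eq[of n Pb] by simp
    have "n mod Pb < Pb" using Pb_pos by simp
    then have "?k * Pb \<le> n" "n < ?k * Pb + Pb" using e by linarith+
    then show ?thesis unfolding blk_def by simp
  qed
  have a: "\<alpha> n \<le> ah ?k" by (rule ah_ge[OF nb])
  have "\<alpha> n * Q n \<le> ah ?k * (K1 * ((Xs ?k + Ys ?k) + ah ?k))"
    using a Q_div[of n] \<alpha>_pos[of n] Q_nonneg[of n] ah_pos by (intro mult_mono) (auto simp: less_imp_le)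
  also have "\<dots> = K1 * ((ah ?k)\<^sup>2 + ah ?k * (Xs ?k + Ys ?k))" by (simp add: algebra_simps power2_eq_square)
  also have "\<dots> \<le> \<beta> ?k" unfolding \<beta>_def
  proof (intro mult_left_mono add_left_mono K1_nonneg)
    have "0 \<le> (ah ?k - (Xs ?k + Ys ?k))\<^sup>2" by simp
    then show "ah ?k * (Xs ?k + Ys ?k) \<le> ((ah ?k)\<^sup>2 + (Xs ?k + Ys ?k)\<^sup>2) / 2"
      by (simp add: power2_eq_square algebra_simps)
  qed
  finally show "\<alpha> n * Q n \<le> \<beta> (n div Pb)" .
qed

end

lemma onorm_inner: "onorm (\<lambda>h. (c::'a::euclidean_space) \<bullet> h) \<le> norm c"
proof (rule onorm_le)
  fix x show "norm (c \<bullet> x) \<le> norm c * norm x" using Cauchy_Schwarz_ineq2[of c x] by simp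
qed

context nxt
begin

definition "Phi n = F (xb n) + (1 / real I) * (\<Sum>i\<in>V. G (x n i))"

lemma F_der: "u \<in> S \<Longrightarrow> (F has_derivative (\<lambda>h. gF u \<bullet> h)) (at u)"
proof -
  assume u: "u \<in> S"
  have "((\<lambda>v. \<Sum>i\<in>V. f i v) has_derivative (\<lambda>h. \<Sum>i\<in>V. gf i u \<bullet> h)) (at u)"
    using fder u by (intro has_derivative_sum) auto
  moreover have "(\<lambda>h. \<Sum>i\<in>V. gf i u \<bullet> h) = (\<lambda>h. gF u \<bullet> h)" unfolding gF_def by (simp add: inner_sum_left)
  ultimately show ?thesis unfolding F_def by simp
qed

lemma F_derK: "u \<in> K \<Longrightarrow> (F has_derivative (\<lambda>h. gF u \<bullet> h)) (at u within T)"
  using F_der Sopen(2) by (blast intro: has_derivative_at_withinI)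

lemma gF_lip: "u \<in> K \<Longrightarrow> v \<in> K \<Longrightarrow> norm (gF u - gF v) \<le> real I * LL * norm (u - v)"
proof -
  assume u: "u \<in> K" and v: "v \<in> K"
  have "norm (gF u - gF v) = norm (\<Sum>i\<in>V. gf i u - gf i v)" unfolding gF_def by (simp add: sum_subtractf)
  also have "\<dots> \<le> (\<Sum>i\<in>V. norm (gf i u - gf i v))" by (rule norm_sum)
  also have "\<dots> \<le> (\<Sum>i\<in>V. LL * norm (u - v))" by (rule sum_mono) (rule gf_lip[OF _ u v])
  also have "\<dots> = real I * LL * norm (u - v)" using V_card by simp
  finally show ?thesis .
qed

lemma F_desc:
  assumes a: "a \<in> K" and b: "b \<in> K"
  shows "F b \<le> F a + gF a \<bullet> (b - a) + real I * LL * (norm (b - a))\<^sup>2"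
proof -
  let ?T = "closed_segment a b"
  have TK: "?T \<subseteq> K" using closed_segment_subset[OF a b A1(3)] .
  have "norm (F b - F a - gF a \<bullet> (b - a)) \<le> norm (b - a) * (real I * LL * norm (b - a))"
  proof (rule differentiable_bound_linearization[where S = ?T and f' = "\<lambda>x h. gF x \<bullet> h"])
    show "a + t *\<^sub>R (b - a) \<in> ?T" if "t \<in> {0..1}" for t
    proof -
      have "a + t *\<^sub>R (b - a) = (1 - t) *\<^sub>R a + t *\<^sub>R b" by (simp add: algebra_simps)
      then show ?thesis using that unfolding closed_segment_def by auto
    qed
    show "(F has_derivative (\<lambda>h. gF x \<bullet> h)) (at x within ?T)" if "x \<in> ?T" for x
      using that TK by (intro F_derK) auto
    show "onorm ((\<lambda>h. gF x \<bullet> h) - (\<lambda>h. gF a \<bullet> h)) \<le> real I * LL * norm (b - a)" if x: "x \<in> ?T" for x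
    proof -
      have "(\<lambda>h. gF x \<bullet> h) - (\<lambda>h. gF a \<bullet> h) = (\<lambda>h. (gF x - gF a) \<bullet> h)" by (auto simp: fun_eq_iff inner_diff_left)
      then have "onorm ((\<lambda>h. gF x \<bullet> h) - (\<lambda>h. gF a \<bullet> h)) \<le> norm (gF x - gF a)" using onorm_inner by simp
      also have "\<dots> \<le> real I * LL * norm (x - a)" using gF_lip x TK a by blast
      also have "\<dots> \<le> real I * LL * norm (b - a)"
        using segment_bound(1)[OF x] LL_nonneg by (intro mult_left_mono) auto
      finally show ?thesis .
    qed
    show "a \<in> ?T" by simp
  qed
  then have "F b - F a - gF a \<bullet> (b - a) \<le> real I * LL * (norm (b - a))\<^sup>2"
    by (simp add: power2_eq_square algebra_simps)
  then show ?thesis by simp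
qed

lemma F_lipK: "u \<in> K \<Longrightarrow> v \<in> K \<Longrightarrow> norm (F u - F v) \<le> LF * norm (u - v)"
proof -
  assume u: "u \<in> K" and v: "v \<in> K"
  show ?thesis
  proof (rule differentiable_bound[OF A1(3) _ _ u v, where f' = "\<lambda>x h. gF x \<bullet> h"])
    show "\<And>x. x \<in> K \<Longrightarrow> (F has_derivative (\<lambda>h. gF x \<bullet> h)) (at x within K)" by (rule F_derK)
    show "onorm (\<lambda>h. gF x \<bullet> h) \<le> LF" if "x \<in> K" for x
      using onorm_inner[of "gF x"] LFb that unfolding gF_def by (meson order_trans)
  qed
qed

lemma G_avg: "(\<Sum>i\<in>V. G (x (Suc n) i)) \<le> (\<Sum>j\<in>V. (1 - \<alpha> n) * G (x n j) + \<alpha> n * G (xt n j))"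
proof -
  have "(\<Sum>i\<in>V. G (x (Suc n) i)) \<le> (\<Sum>i\<in>V. (\<Sum>j\<in>V. w n i j * G (z n j)))"
  proof (rule sum_mono)
    fix i assume i: "i \<in> V"
    have "G (x (Suc n) i) = G (\<Sum>j\<in>V. w n i j *\<^sub>R z n j)" using x_upd i by simp
    also have "\<dots> \<le> (\<Sum>j\<in>V. w n i j * G (z n j))"
      using w_nonneg[OF i] w_row[OF i] by (intro convex_on_sum[OF V_fin V_ne Gconv]) auto
    finally show "G (x (Suc n) i) \<le> (\<Sum>j\<in>V. w n i j * G (z n j))" .
  qed
  also have "\<dots> = (\<Sum>j\<in>V. (\<Sum>i\<in>V. w n i j) * G (z n j))"
    by (subst sum.swap) (simp add: sum_distrib_right)
  also have "\<dots> = (\<Sum>j\<in>V. G (z n j))" using w_col by simp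
  also have "\<dots> \<le> (\<Sum>j\<in>V. (1 - \<alpha> n) * G (x n j) + \<alpha> n * G (xt n j))"
  proof (rule sum_mono)
    fix j assume j: "j \<in> V"
    have "z n j = (1 - \<alpha> n) *\<^sub>R x n j + \<alpha> n *\<^sub>R xt n j" using z_def j by (simp add: algebra_simps)
    then show "G (z n j) \<le> (1 - \<alpha> n) * G (x n j) + \<alpha> n * G (xt n j)"
      using convex_onD[OF Gconv, of "\<alpha> n" "x n j" "xt n j"] \<alpha>_pos[of n] \<alpha>_le1[of n] by simp
  qed
  finally show ?thesis .
qed

lemma T_bound:
  assumes j: "j \<in> V"
  shows "gF (xb n) \<bullet> (xt n j - x n j) + G (xt n j) - G (x n j) \<le> eps n * Mx n - \<tau>m / 2 * (dd n j)\<^sup>2"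
proof -
  have k: "G (xt n j) - G (x n j) \<le> - (\<tau> j / 2) * (dd n j)\<^sup>2 - (real I *\<^sub>R y n j) \<bullet> (xt n j - x n j)"
    by (rule key[OF j])
  have "(gF (xb n) - real I *\<^sub>R y n j) \<bullet> (xt n j - x n j) \<le> norm (gF (xb n) - real I *\<^sub>R y n j) * norm (xt n j - x n j)"
    by (rule norm_cauchy_schwarz)
  also have "\<dots> \<le> eps n * Mx n"
    using gF_y[OF j] dd_le_Mx[OF j] eps_nonneg unfolding dd_def by (intro mult_mono) auto
  finally have 1: "(gF (xb n) - real I *\<^sub>R y n j) \<bullet> (xt n j - x n j) \<le> eps n * Mx n" .
  have 2: "\<tau>m / 2 * (dd n j)\<^sup>2 \<le> \<tau> j / 2 * (dd n j)\<^sup>2" using \<tau>m_le[OF j] by (intro mult_right_mono) auto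
  show ?thesis using k 1 2 by (simp add: inner_diff_left)
qed

lemma descent: "Phi (Suc n) \<le> Phi n - \<alpha> n * (\<tau>m / (2 * real I) * (\<Sum>j\<in>V. (dd n j)\<^sup>2))
        + \<alpha> n * (eps n * Mx n) + real I * LL * (\<alpha> n)\<^sup>2 * (Mx n)\<^sup>2"
proof -
  let ?vb = "(1 / real I) *\<^sub>R (\<Sum>j\<in>V. xt n j - x n j)"
  have cI: "real I > 0" using I_pos by simp
  have nvb: "norm ?vb \<le> Mx n"
  proof -
    have "norm (\<Sum>j\<in>V. xt n j - x n j) \<le> (\<Sum>j\<in>V. norm (xt n j - x n j))" by (rule norm_sum)
    also have "\<dots> \<le> (\<Sum>j\<in>V. Mx n)" using dd_le_Mx unfolding dd_def by (intro sum_mono) auto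
    also have "\<dots> = real I * Mx n" using V_card by simp
    finally show ?thesis using cI by (simp add: field_simps)
  qed
  have Fd: "F (xb (Suc n)) \<le> F (xb n) + gF (xb n) \<bullet> (\<alpha> n *\<^sub>R ?vb) + real I * LL * (norm (\<alpha> n *\<^sub>R ?vb))\<^sup>2"
  proof -
    have "F (xb (Suc n)) \<le> F (xb n) + gF (xb n) \<bullet> (xb (Suc n) - xb n) + real I * LL * (norm (xb (Suc n) - xb n))\<^sup>2"
      by (rule F_desc[OF xbK xbK])
    moreover have "xb (Suc n) - xb n = \<alpha> n *\<^sub>R ?vb" using xb_Suc[of n] by simp
    ultimately show ?thesis by simp
  qed
  have nsq: "(norm (\<alpha> n *\<^sub>R ?vb))\<^sup>2 \<le> (\<alpha> n)\<^sup>2 * (Mx n)\<^sup>2"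
  proof -
    have "norm (\<alpha> n *\<^sub>R ?vb) = \<alpha> n * norm ?vb" using \<alpha>_pos[of n] by simp
    also have "\<dots> \<le> \<alpha> n * Mx n" using nvb \<alpha>_pos[of n] by (intro mult_left_mono) auto
    finally have "norm (\<alpha> n *\<^sub>R ?vb) \<le> \<alpha> n * Mx n" .
    then have "(norm (\<alpha> n *\<^sub>R ?vb))\<^sup>2 \<le> (\<alpha> n * Mx n)\<^sup>2" by (intro power_mono) auto
    then show ?thesis by (simp add: power_mult_distrib)
  qed
  have Fd2: "F (xb (Suc n)) \<le> F (xb n) + \<alpha> n * (gF (xb n) \<bullet> ?vb) + real I * LL * (\<alpha> n)\<^sup>2 * (Mx n)\<^sup>2"
  proof -
    have "real I * LL * (norm (\<alpha> n *\<^sub>R ?vb))\<^sup>2 \<le> real I * LL * ((\<alpha> n)\<^sup>2 * (Mx n)\<^sup>2)"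
      using nsq LL_nonneg by (intro mult_left_mono) auto
    then show ?thesis using Fd by (simp add: mult.assoc)
  qed
  have Gd: "(1 / real I) * (\<Sum>i\<in>V. G (x (Suc n) i)) \<le> (1 / real I) * (\<Sum>j\<in>V. G (x n j)) + \<alpha> n * ((1 / real I) * (\<Sum>j\<in>V. G (xt n j) - G (x n j)))"
  proof -
    have "(1 / real I) * (\<Sum>i\<in>V. G (x (Suc n) i)) \<le> (1 / real I) * (\<Sum>j\<in>V. (1 - \<alpha> n) * G (x n j) + \<alpha> n * G (xt n j))"
      using G_avg cI by (intro mult_left_mono) auto
    also have "(\<Sum>j\<in>V. (1 - \<alpha> n) * G (x n j) + \<alpha> n * G (xt n j)) = (\<Sum>j\<in>V. G (x n j)) + \<alpha> n * (\<Sum>j\<in>V. G (xt n j) - G (x n j))"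
      by (simp add: algebra_simps sum.distrib sum_subtractf sum_distrib_left)
    finally show ?thesis by (simp add: algebra_simps)
  qed
  have Tsum: "(\<Sum>j\<in>V. gF (xb n) \<bullet> (xt n j - x n j) + G (xt n j) - G (x n j)) \<le> (\<Sum>j\<in>V. eps n * Mx n - \<tau>m / 2 * (dd n j)\<^sup>2)"
    by (rule sum_mono) (rule T_bound)
  have Tl: "(\<Sum>j\<in>V. gF (xb n) \<bullet> (xt n j - x n j) + G (xt n j) - G (x n j)) = real I * (gF (xb n) \<bullet> ?vb) + (\<Sum>j\<in>V. G (xt n j) - G (x n j))"
    using cI by (simp add: sum.distrib sum_subtractf inner_sum_right algebra_simps)
  have Tr: "(\<Sum>j\<in>V. eps n * Mx n - \<tau>m / 2 * (dd n j)\<^sup>2) = real I * (eps n * Mx n) - \<tau>m / 2 * (\<Sum>j\<in>V. (dd n j)\<^sup>2)"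
    using V_card by (simp add: sum_subtractf sum_distrib_left)
  have comb: "gF (xb n) \<bullet> ?vb + (1 / real I) * (\<Sum>j\<in>V. G (xt n j) - G (x n j)) \<le> eps n * Mx n - \<tau>m / (2 * real I) * (\<Sum>j\<in>V. (dd n j)\<^sup>2)"
  proof -
    have "real I * (gF (xb n) \<bullet> ?vb) + (\<Sum>j\<in>V. G (xt n j) - G (x n j)) \<le> real I * (eps n * Mx n) - \<tau>m / 2 * (\<Sum>j\<in>V. (dd n j)\<^sup>2)"
      using Tsum Tl Tr by simp
    then have "(1 / real I) * (real I * (gF (xb n) \<bullet> ?vb) + (\<Sum>j\<in>V. G (xt n j) - G (x n j))) \<le> (1 / real I) * (real I * (eps n * Mx n) - \<tau>m / 2 * (\<Sum>j\<in>V. (dd n j)\<^sup>2))"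
      using cI by (intro mult_left_mono) auto
    then show ?thesis using cI by (simp add: field_simps)
  qed
  have "Phi (Suc n) \<le> F (xb n) + \<alpha> n * (gF (xb n) \<bullet> ?vb) + real I * LL * (\<alpha> n)\<^sup>2 * (Mx n)\<^sup>2
       + (1 / real I) * (\<Sum>j\<in>V. G (x n j)) + \<alpha> n * ((1 / real I) * (\<Sum>j\<in>V. G (xt n j) - G (x n j)))"
    unfolding Phi_def using Fd2 Gd by simp
  also have "\<dots> = Phi n + \<alpha> n * (gF (xb n) \<bullet> ?vb + (1 / real I) * (\<Sum>j\<in>V. G (xt n j) - G (x n j))) + real I * LL * (\<alpha> n)\<^sup>2 * (Mx n)\<^sup>2"
    unfolding Phi_def by (simp add: algebra_simps)
  also have "\<dots> \<le> Phi n + \<alpha> n * (eps n * Mx n - \<tau>m / (2 * real I) * (\<Sum>j\<in>V. (dd n j)\<^sup>2)) + real I * LL * (\<alpha> n)\<^sup>2 * (Mx n)\<^sup>2"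
    using comb \<alpha>_pos[of n] by (simp add: mult_left_mono)
  finally show ?thesis by (simp add: algebra_simps)
qed

end

context nxt
begin

definition "err n = \<alpha> n * (eps n * Mx n) + real I * LL * (\<alpha> n)\<^sup>2 * (Mx n)\<^sup>2"
definition "Sd n = \<tau>m / (2 * real I) * (\<Sum>j\<in>V. (dd n j)\<^sup>2)"
definition "U u = F u + G u"

lemma err_nonneg: "err n \<ge> 0"
  unfolding err_def using \<alpha>_pos[of n] eps_nonneg[of n] Mx_nonneg[of n] LL_nonneg by simp

lemma Sd_nonneg: "Sd n \<ge> 0" unfolding Sd_def using \<tau>m_pos by (simp add: sum_nonneg)

lemma eps_Q: "eps n \<le> real I * (1 + LL) * Q n"
  unfolding eps_def Q_def using dx_nonneg[of n] dy_nonneg[of n] LL_nonneg I_real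
  by (simp add: algebra_simps mult_nonneg_nonneg)

lemma err_summ: "summable err"
proof -
  have "summable (\<lambda>n. real I * (1 + LL) * Mbnd * (\<alpha> n * Q n) + real I * LL * Mbnd\<^sup>2 * (\<alpha> n)\<^sup>2)"
    by (intro summable_add summable_mult sum_aQ step(3))
  then show ?thesis
  proof (rule summable_comparison_test'[where N = 0])
    fix n :: nat assume "n \<ge> 0"
    have a: "\<alpha> n * (eps n * Mx n) \<le> \<alpha> n * ((real I * (1 + LL) * Q n) * Mbnd)"
      using eps_Q[of n] Mx_bdd[of n] eps_nonneg[of n] Mx_nonneg[of n] \<alpha>_pos[of n] Q_nonneg[of n] LL_nonneg
      by (intro mult_left_mono mult_mono) auto
    have b: "real I * LL * (\<alpha> n)\<^sup>2 * (Mx n)\<^sup>2 \<le> real I * LL * (\<alpha> n)\<^sup>2 * Mbnd\<^sup>2"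
      using Mx_bdd[of n] Mx_nonneg[of n] LL_nonneg by (intro mult_left_mono power_mono) auto
    show "norm (err n) \<le> real I * (1 + LL) * Mbnd * (\<alpha> n * Q n) + real I * LL * Mbnd\<^sup>2 * (\<alpha> n)\<^sup>2"
      using a b err_nonneg[of n] unfolding err_def by (simp add: algebra_simps)
  qed
qed

lemma desc2: "Phi (Suc n) \<le> Phi n - \<alpha> n * Sd n + err n"
  using descent[of n] unfolding Sd_def err_def by (simp add: algebra_simps)

lemma tele: "Phi n + (\<Sum>k<n. \<alpha> k * Sd k) \<le> Phi 0 + (\<Sum>k<n. err k)"
proof (induction n)
  case 0 then show ?case by simp
next
  case (Suc n) then show ?case using desc2[of n] by simp
qed

lemma Phi_ge: "U (xb n) \<le> Phi n"
proof -
  have "G (xb n) = G (\<Sum>i\<in>V. (1 / real I) *\<^sub>R x n i)" unfolding xb_def by (simp add: scaleR_sum_right)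
  also have "\<dots> \<le> (\<Sum>i\<in>V. (1 / real I) * G (x n i))"
    using I_pos V_card by (intro convex_on_sum[OF V_fin V_ne Gconv]) auto
  finally show ?thesis unfolding U_def Phi_def by (simp add: sum_distrib_left)
qed

lemma U_low: "\<exists>Ul. \<forall>u\<in>K. Ul \<le> U u"
proof -
  obtain R where R: "\<forall>u\<in>K. norm u \<ge> R \<longrightarrow> U u \<ge> 0"
    using A6 unfolding coercive_on_def U_def F_def by blast
  obtain u0 where u0: "u0 \<in> K" using A1 by auto
  have "\<forall>u\<in>K. min 0 (U u0 - (LF + LG) * (R + norm u0)) \<le> U u"
  proof
    fix u assume u: "u \<in> K"
    show "min 0 (U u0 - (LF + LG) * (R + norm u0)) \<le> U u"
    proof (cases "norm u \<ge> R")
      case True then have "0 \<le> U u" using R u by blast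
      then show ?thesis by (simp add: min.coboundedI1)
    next
      case False
      have f: "F u0 - F u \<le> LF * norm (u - u0)"
        using F_lipK[OF u u0] by (simp add: abs_le_iff norm_minus_commute)
      have g: "G u0 - G u \<le> LG * norm (u - u0)" using G_lip[OF u0 u] by (simp add: norm_minus_commute)
      have n: "norm (u - u0) \<le> R + norm u0" using False norm_triangle_ineq4[of u u0] by simp
      have "(LF + LG) * norm (u - u0) \<le> (LF + LG) * (R + norm u0)"
        using n LF_nonneg LG_nonneg by (intro mult_left_mono) auto
      then have "U u0 - (LF + LG) * (R + norm u0) \<le> U u" using f g unfolding U_def by (simp add: algebra_simps)
      then show ?thesis by simp
    qed
  qed
  then show ?thesis by blast
qed

definition "Ul = (SOME Ul. \<forall>u\<in>K. Ul \<le> U u)"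

lemma Ul: "u \<in> K \<Longrightarrow> Ul \<le> U u"
  unfolding Ul_def using someI_ex[OF U_low] by blast

lemma Phi_up: "Phi n \<le> Phi 0 + suminf err"
proof -
  have "(\<Sum>k<n. err k) \<le> suminf err" using err_summ err_nonneg by (intro sum_le_suminf) auto
  moreover have "(\<Sum>k<n. \<alpha> k * Sd k) \<ge> 0" using \<alpha>_pos Sd_nonneg by (intro sum_nonneg) (simp add: less_imp_le)
  ultimately show ?thesis using tele[of n] by simp
qed

lemma xb_bounded: "bounded (range xb)"
proof -
  obtain R where R: "\<forall>u\<in>K. norm u \<ge> R \<longrightarrow> U u \<ge> Phi 0 + suminf err + 1"
    using A6 unfolding coercive_on_def U_def F_def by blast
  have "norm (xb n) \<le> R" for n
  proof (rule ccontr)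
    assume "\<not> norm (xb n) \<le> R"
    then have "U (xb n) \<ge> Phi 0 + suminf err + 1" using R xbK by auto
    then show False using Phi_ge[of n] Phi_up[of n] by simp
  qed
  then show ?thesis unfolding bounded_iff by blast
qed

lemma aSd_summ: "summable (\<lambda>n. \<alpha> n * Sd n)"
proof (rule summableI_nonneg_bounded)
  show "\<And>n. 0 \<le> \<alpha> n * Sd n" using \<alpha>_pos Sd_nonneg by (simp add: less_imp_le)
  fix n
  have "(\<Sum>k<n. err k) \<le> suminf err" using err_summ err_nonneg by (intro sum_le_suminf) auto
  moreover have "Ul \<le> Phi n" using Ul[OF xbK, of n] Phi_ge[of n] by simp
  ultimately show "(\<Sum>k<n. \<alpha> k * Sd k) \<le> Phi 0 + suminf err - Ul" using tele[of n] by simp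
qed

lemma ad1_summ: "summable (\<lambda>n. \<alpha> n * (dd n 1)\<^sup>2)"
proof -
  have "summable (\<lambda>n. (2 * real I / \<tau>m) * (\<alpha> n * Sd n))" using aSd_summ by (rule summable_mult)
  then show ?thesis
  proof (rule summable_comparison_test'[where N = 0])
    fix n :: nat assume "n \<ge> 0"
    have "(dd n 1)\<^sup>2 \<le> (\<Sum>j\<in>V. (dd n j)\<^sup>2)" using one_V V_fin by (intro member_le_sum) auto
    then have "(dd n 1)\<^sup>2 \<le> (2 * real I / \<tau>m) * Sd n" using \<tau>m_pos I_pos unfolding Sd_def by (simp add: field_simps)
    then have "\<alpha> n * (dd n 1)\<^sup>2 \<le> \<alpha> n * ((2 * real I / \<tau>m) * Sd n)" using \<alpha>_pos[of n] by (intro mult_left_mono) auto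
    then show "norm (\<alpha> n * (dd n 1)\<^sup>2) \<le> (2 * real I / \<tau>m) * (\<alpha> n * Sd n)" using \<alpha>_pos[of n] by (simp add: algebra_simps)
  qed
qed

end

context nxt
begin

lemma LS_nonneg: "LS \<ge> 0"
proof -
  obtain u where "u \<in> K" using A1 by auto
  then show ?thesis using LSLip one_V lipschitz_on_nonneg by blast
qed

lemma gft_lip: "j \<in> V \<Longrightarrow> u \<in> K \<Longrightarrow> v1 \<in> K \<Longrightarrow> v2 \<in> K \<Longrightarrow> norm (gft j u v1 - gft j u v2) \<le> LS * norm (v1 - v2)"
  using LSLip lipschitz_on_normD by blast

lemma ft_diff:
  assumes j: "j \<in> V" and v: "v1 \<in> K" "v2 \<in> K" and u: "u1 \<in> K" "u2 \<in> K"
  shows "norm ((ft j u1 v1 - ft j u1 v2) - (ft j u2 v1 - ft j u2 v2)) \<le> LS * norm (v1 - v2) * norm (u1 - u2)"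
proof (rule differentiable_bound[OF A1(3) _ _ u, where f = "\<lambda>w. ft j w v1 - ft j w v2" and f' = "\<lambda>x h. (gft j x v1 - gft j x v2) \<bullet> h"])
  show "((\<lambda>w. ft j w v1 - ft j w v2) has_derivative (\<lambda>h. (gft j x v1 - gft j x v2) \<bullet> h)) (at x within K)" if x: "x \<in> K" for x
  proof -
    have "((\<lambda>w. ft j w v1 - ft j w v2) has_derivative (\<lambda>h. gft j x v1 \<bullet> h - gft j x v2 \<bullet> h)) (at x within K)"
      using F_diff j v x by (intro has_derivative_diff) auto
    then show ?thesis by (simp add: inner_diff_left)
  qed
  show "onorm (\<lambda>h. (gft j x v1 - gft j x v2) \<bullet> h) \<le> LS * norm (v1 - v2)" if x: "x \<in> K" for x
    using onorm_inner[of "gft j x v1 - gft j x v2"] gft_lip[OF j x v] by linarith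
qed

lemma argmin_lip:
  assumes j: "j \<in> V" and v: "v1 \<in> K" "v2 \<in> K" and u: "u1 \<in> K" "u2 \<in> K"
    and o1: "\<forall>w\<in>K. ft j u1 v1 + p1 \<bullet> (u1 - q1) + G u1 \<le> ft j w v1 + p1 \<bullet> (w - q1) + G w"
    and o2: "\<forall>w\<in>K. ft j u2 v2 + p2 \<bullet> (u2 - q2) + G u2 \<le> ft j w v2 + p2 \<bullet> (w - q2) + G w"
  shows "\<tau> j * norm (u1 - u2) \<le> LS * norm (v1 - v2) + norm (p1 - p2)"
proof -
  let ?d = "norm (u1 - u2)"
  have tj: "\<tau> j > 0" using F1 j by blast
  have sc1: "strongly_convex_on K (\<tau> j) (\<lambda>w. ft j w v1 + p1 \<bullet> (w - q1) + G w)"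
    using F1 j v by (intro sc_comb[OF _ Gconv]) auto
  have sc2: "strongly_convex_on K (\<tau> j) (\<lambda>w. ft j w v2 + p2 \<bullet> (w - q2) + G w)"
    using F1 j v by (intro sc_comb[OF _ Gconv]) auto
  have 1: "(ft j u2 v1 + p1 \<bullet> (u2 - q1) + G u2) - (ft j u1 v1 + p1 \<bullet> (u1 - q1) + G u1) \<ge> \<tau> j / 2 * (norm (u2 - u1))\<^sup>2"
    using sc_argmin[OF sc1 A1(3) u(1) u(2)] o1 by simp
  have 2: "(ft j u1 v2 + p2 \<bullet> (u1 - q2) + G u1) - (ft j u2 v2 + p2 \<bullet> (u2 - q2) + G u2) \<ge> \<tau> j / 2 * (norm (u1 - u2))\<^sup>2"
    using sc_argmin[OF sc2 A1(3) u(2) u(1)] o2 by simp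
  have nd: "norm (u2 - u1) = ?d" by (rule norm_minus_commute)
  have "\<tau> j * ?d\<^sup>2 \<le> ((ft j u2 v1 - ft j u2 v2) - (ft j u1 v1 - ft j u1 v2)) + (p1 - p2) \<bullet> (u2 - u1)"
    using 1 2 nd by (simp add: inner_diff_left inner_diff_right algebra_simps)
  also have "\<dots> \<le> LS * norm (v1 - v2) * ?d + norm (p1 - p2) * ?d"
  proof -
    have "(ft j u2 v1 - ft j u2 v2) - (ft j u1 v1 - ft j u1 v2) \<le> LS * norm (v1 - v2) * norm (u2 - u1)"
      using ft_diff[OF j v u(2) u(1)] by simp
    moreover have "(p1 - p2) \<bullet> (u2 - u1) \<le> norm (p1 - p2) * norm (u2 - u1)" by (rule norm_cauchy_schwarz)
    ultimately show ?thesis using nd by simp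
  qed
  finally have A: "\<tau> j * ?d * ?d \<le> (LS * norm (v1 - v2) + norm (p1 - p2)) * ?d"
    by (simp add: power2_eq_square algebra_simps)
  show ?thesis
  proof (cases "?d = 0")
    case True then show ?thesis using LS_nonneg by simp
  next
    case False then have "?d > 0" by simp
    then show ?thesis using A by (simp add: mult_le_cancel_right_pos)
  qed
qed

lemma G_cont: "continuous_on T G"
  using convex_on_continuous[OF open_UNIV Gconv] continuous_on_subset by blast

lemma argmin_exists:
  assumes j: "j \<in> V" and v: "v \<in> K"
  shows "\<exists>u\<in>K. \<forall>w\<in>K. ft j u v + p \<bullet> (u - q) + G u \<le> ft j w v + p \<bullet> (w - q) + G w"
proof -
  define \<phi> where "\<phi> w = ft j w v + p \<bullet> (w - q) + G w" for w
  obtain w0 where w0: "w0 \<in> K" using A1 by auto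
  obtain \<xi> where \<xi>: "\<xi> \<in> subdiff G w0" using subgrad_exists[OF Gconv] by blast
  have tj: "\<tau> j > 0" using F1 j by blast
  have sc0: "strongly_convex_on K (\<tau> j) (\<lambda>w. ft j w v)" using F1 j v by blast
  have der0: "((\<lambda>w. ft j w v) has_derivative (\<lambda>h. gft j w0 v \<bullet> h)) (at w0 within K)" using F_diff j v w0 by blast
  define g where "g = gft j w0 v + p + \<xi>"
  define R0 where "R0 = 2 * norm g / \<tau> j"
  have R0: "R0 \<ge> 0" unfolding R0_def using tj by simp
  have grow: "\<phi> w \<ge> \<phi> w0 + g \<bullet> (w - w0) + \<tau> j / 2 * (norm (w - w0))\<^sup>2" if w: "w \<in> K" for w
  proof -
    have a: "ft j w v \<ge> ft j w0 v + gft j w0 v \<bullet> (w - w0) + \<tau> j / 2 * (norm (w - w0))\<^sup>2"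
      by (rule fosc[OF sc0 der0 A1(3) w0 w])
    have b: "G w \<ge> G w0 + \<xi> \<bullet> (w - w0)" using \<xi> unfolding subdiff_def by blast
    have c: "p \<bullet> (w - q) = p \<bullet> (w0 - q) + p \<bullet> (w - w0)" by (simp add: inner_diff_right)
    show ?thesis using a b c unfolding \<phi>_def g_def by (simp add: inner_add_left)
  qed
  have far: "\<phi> w > \<phi> w0" if w: "w \<in> K" and f: "norm (w - w0) > R0" for w
  proof -
    let ?d = "norm (w - w0)"
    have d0: "?d > 0" using f R0 by linarith
    have "g \<bullet> (w - w0) \<ge> - (norm g * ?d)" using Cauchy_Schwarz_ineq2[of g "w - w0"] by simp
    moreover have "\<tau> j / 2 * ?d\<^sup>2 > norm g * ?d"
    proof -
      have "\<tau> j / 2 * ?d > norm g" using f tj unfolding R0_def by (simp add: field_simps)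
      then have "\<tau> j / 2 * ?d * ?d > norm g * ?d" using d0 by (simp add: mult_strict_right_mono)
      then show ?thesis by (simp add: power2_eq_square mult.assoc)
    qed
    ultimately show ?thesis using grow[OF w] by simp
  qed
  define T where "T = K \<inter> cball w0 R0"
  have cT: "compact T" unfolding T_def using A1(2) by (simp add: compact_Int_closed compact_cball Int_commute closed_Int_compact)
  have neT: "T \<noteq> {}" unfolding T_def using w0 R0 by auto
  have contK: "continuous_on K \<phi>"
  proof -
    have "continuous_on K (\<lambda>w. ft j w v)"
      unfolding continuous_on_eq_continuous_within
    proof
      fix x assume x: "x \<in> K"
      show "continuous (at x within K) (\<lambda>w. ft j w v)"
        using F_diff j v x by (blast intro: has_derivative_continuous)
    qed
    then show ?thesis unfolding \<phi>_def by (intro continuous_intros G_cont)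
  qed
  have contT: "continuous_on T \<phi>" using contK unfolding T_def by (rule continuous_on_subset) auto
  obtain u where u: "u \<in> T" "\<forall>w\<in>T. \<phi> u \<le> \<phi> w" using continuous_attains_inf[OF cT neT contT] by blast
  have "\<forall>w\<in>K. \<phi> u \<le> \<phi> w"
  proof
    fix w assume w: "w \<in> K"
    show "\<phi> u \<le> \<phi> w"
    proof (cases "norm (w - w0) \<le> R0")
      case True
      then have "w \<in> T" unfolding T_def using w by (simp add: dist_norm norm_minus_commute)
      then show ?thesis using u by blast
    next
      case False
      have "w0 \<in> T" unfolding T_def using w0 R0 by simp
      then have "\<phi> u \<le> \<phi> w0" using u by blast
      then show ?thesis using far[OF w] False by simp
    qed
  qed
  moreover have "u \<in> K" using u unfolding T_def by blast
  ultimately show ?thesis unfolding \<phi>_def by blast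
qed

end

context nxt
begin

definition "pf v = gF v - gf 1 v"
definition "xh v = (SOME u. u \<in> K \<and> (\<forall>w\<in>K. ft 1 u v + pf v \<bullet> (u - v) + G u \<le> ft 1 w v + pf v \<bullet> (w - v) + G w))"

lemma xh_prop: "v \<in> K \<Longrightarrow> xh v \<in> K \<and> (\<forall>w\<in>K. ft 1 (xh v) v + pf v \<bullet> (xh v - v) + G (xh v) \<le> ft 1 w v + pf v \<bullet> (w - v) + G w)"
proof -
  assume v: "v \<in> K"
  obtain u where u: "u \<in> K" "\<forall>w\<in>K. ft 1 u v + pf v \<bullet> (u - v) + G u \<le> ft 1 w v + pf v \<bullet> (w - v) + G w"
    using argmin_exists[OF one_V v, of "pf v" v] by blast
  show ?thesis unfolding xh_def
    by (rule someI[of "\<lambda>u. u \<in> K \<and> (\<forall>w\<in>K. ft 1 u v + pf v \<bullet> (u - v) + G u \<le> ft 1 w v + pf v \<bullet> (w - v) + G w)" u])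
       (use u in blast)
qed

definition "\<tau>1 = \<tau> 1"
lemma \<tau>1_pos: "\<tau>1 > 0" unfolding \<tau>1_def using F1 one_V by blast

definition "Lh = (LS + (real I + 1) * LL) / \<tau>1"

lemma pf_lip: "u \<in> K \<Longrightarrow> v \<in> K \<Longrightarrow> norm (pf u - pf v) \<le> (real I + 1) * LL * norm (u - v)"
proof -
  assume u: "u \<in> K" and v: "v \<in> K"
  have "pf u - pf v = (gF u - gF v) - (gf 1 u - gf 1 v)" unfolding pf_def by simp
  then have "norm (pf u - pf v) \<le> norm (gF u - gF v) + norm (gf 1 u - gf 1 v)" by (metis norm_triangle_ineq4)
  also have "\<dots> \<le> real I * LL * norm (u - v) + LL * norm (u - v)"
    using gF_lip[OF u v] gf_lip[OF one_V u v] by simp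
  finally show ?thesis by (simp add: algebra_simps)
qed

lemma xh_lip: "u \<in> K \<Longrightarrow> v \<in> K \<Longrightarrow> norm (xh u - xh v) \<le> Lh * norm (u - v)"
proof -
  assume u: "u \<in> K" and v: "v \<in> K"
  have "\<tau> 1 * norm (xh u - xh v) \<le> LS * norm (u - v) + norm (pf u - pf v)"
    using xh_prop[OF u] xh_prop[OF v] by (intro argmin_lip[OF one_V u v]) auto
  also have "\<dots> \<le> (LS + (real I + 1) * LL) * norm (u - v)" using pf_lip[OF u v] by (simp add: algebra_simps)
  finally show ?thesis unfolding Lh_def using \<tau>1_pos unfolding \<tau>1_def by (simp add: field_simps)
qed

lemma Lh_nonneg: "Lh \<ge> 0" unfolding Lh_def using LS_nonneg LL_nonneg \<tau>1_pos by simp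

definition "Ch = (LS + LL + real I * (1 + LL)) / \<tau>1"

lemma xt_dev: "norm (xt n 1 - xh (xb n)) \<le> Ch * Q n"
proof -
  have o1: "\<forall>w\<in>K. ft 1 (xt n 1) (x n 1) + pit n 1 \<bullet> (xt n 1 - x n 1) + G (xt n 1) \<le> ft 1 w (x n 1) + pit n 1 \<bullet> (w - x n 1) + G w"
    using xt_def one_V by blast
  have "\<tau> 1 * norm (xt n 1 - xh (xb n)) \<le> LS * norm (x n 1 - xb n) + norm (pit n 1 - pf (xb n))"
    using xh_prop[OF xbK] o1 by (intro argmin_lip[OF one_V xK[OF one_V] xbK xtK[OF one_V]]) auto
  also have "\<dots> \<le> LS * dx n + (eps n + LL * dx n)"
  proof -
    have d: "norm (x n 1 - xb n) \<le> dx n"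
      using mean_dev[OF V_fin _ one_V, of "x n"] V_card I_pos unfolding dx_def xb_def by simp
    have "pit n 1 - pf (xb n) = - (gF (xb n) - real I *\<^sub>R y n 1) - (gf 1 (x n 1) - gf 1 (xb n))"
      using pit_def one_V unfolding pf_def by simp
    then have "norm (pit n 1 - pf (xb n)) \<le> norm (gF (xb n) - real I *\<^sub>R y n 1) + norm (gf 1 (x n 1) - gf 1 (xb n))"
      by (metis norm_minus_cancel norm_triangle_ineq4)
    also have "\<dots> \<le> eps n + LL * dx n"
    proof -
      have "LL * norm (x n 1 - xb n) \<le> LL * dx n" using d LL_nonneg by (rule mult_left_mono)
      moreover have "norm (gf 1 (x n 1) - gf 1 (xb n)) \<le> LL * norm (x n 1 - xb n)"
        by (rule gf_lip[OF one_V xK[OF one_V, of n] xbK[of n]])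
      ultimately show ?thesis using gF_y[OF one_V, of n] by linarith
    qed
    finally have e: "norm (pit n 1 - pf (xb n)) \<le> eps n + LL * dx n" .
    have "LS * norm (x n 1 - xb n) \<le> LS * dx n" using d LS_nonneg by (rule mult_left_mono)
    then show ?thesis using e by simp
  qed
  also have "\<dots> \<le> (LS + LL + real I * (1 + LL)) * Q n"
  proof -
    have "LL * dy n \<ge> 0" "LS * dy n \<ge> 0" using dy_nonneg[of n] LS_nonneg LL_nonneg by simp_all
    then show ?thesis using eps_Q[of n] unfolding Q_def by (simp add: algebra_simps)
  qed
  finally show ?thesis unfolding Ch_def using \<tau>1_pos unfolding \<tau>1_def by (simp add: field_simps)
qed

lemma Ch_nonneg: "Ch \<ge> 0" unfolding Ch_def using LS_nonneg LL_nonneg \<tau>1_pos by simp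

definition "hs n = norm (xh (xb n) - xb n)"

lemma hs_bound: "hs n \<le> (Ch + 1) * Q n + dd n 1"
proof -
  have d: "norm (x n 1 - xb n) \<le> Q n"
    using mean_dev[OF V_fin _ one_V, of "x n"] V_card I_pos dy_nonneg[of n] unfolding dx_def xb_def Q_def by simp
  have eq: "xh (xb n) - xb n = ((xh (xb n) - xt n 1) + (xt n 1 - x n 1)) + (x n 1 - xb n)" by simp
  have "hs n \<le> norm ((xh (xb n) - xt n 1) + (xt n 1 - x n 1)) + norm (x n 1 - xb n)"
    unfolding hs_def eq by (rule norm_triangle_ineq)
  moreover have "norm ((xh (xb n) - xt n 1) + (xt n 1 - x n 1)) \<le> norm (xh (xb n) - xt n 1) + norm (xt n 1 - x n 1)"
    by (rule norm_triangle_ineq)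
  ultimately have "hs n \<le> norm (xh (xb n) - xt n 1) + norm (xt n 1 - x n 1) + norm (x n 1 - xb n)" by simp
  then show ?thesis using xt_dev[of n] d unfolding dd_def by (simp add: norm_minus_commute algebra_simps)
qed

definition "Hb = (Ch + 1) * Qmax + Mbnd"

lemma hs_bdd: "hs n \<le> Hb"
proof -
  have "(Ch + 1) * Q n \<le> (Ch + 1) * Qmax" using Q_bdd Ch_nonneg by (intro mult_left_mono) auto
  moreover have "dd n 1 \<le> Mbnd" using dd_le_Mx[OF one_V, of n] Mx_bdd[of n] by simp
  ultimately show ?thesis using hs_bound[of n] unfolding Hb_def by simp
qed

lemma hs_nonneg: "hs n \<ge> 0" unfolding hs_def by simp

lemma xb_move: "norm (xb (Suc n) - xb n) \<le> \<alpha> n * Mbnd"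
proof -
  have cI: "real I > 0" using I_pos by simp
  have "norm (\<Sum>j\<in>V. xt n j - x n j) \<le> (\<Sum>j\<in>V. norm (xt n j - x n j))" by (rule norm_sum)
  also have "\<dots> \<le> (\<Sum>j\<in>V. Mbnd)"
  proof (rule sum_mono)
    fix j assume "j \<in> V"
    then show "norm (xt n j - x n j) \<le> Mbnd" using dd_le_Mx[of j n] Mx_bdd[of n] unfolding dd_def by simp
  qed
  also have "\<dots> = real I * Mbnd" using V_card by simp
  finally have a: "norm ((1 / real I) *\<^sub>R (\<Sum>j\<in>V. xt n j - x n j)) \<le> Mbnd" using cI by (simp add: field_simps)
  have "norm (xb (Suc n) - xb n) = \<alpha> n * norm ((1 / real I) *\<^sub>R (\<Sum>j\<in>V. xt n j - x n j))"
    using xb_Suc[of n] \<alpha>_pos[of n] by simp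
  also have "\<dots> \<le> \<alpha> n * Mbnd" using a \<alpha>_pos[of n] by (intro mult_left_mono) auto
  finally show ?thesis .
qed

lemma hs_move: "hs (Suc n) - hs n \<le> (Lh + 1) * Mbnd * \<alpha> n"
proof -
  have "hs (Suc n) - hs n \<le> norm ((xh (xb (Suc n)) - xb (Suc n)) - (xh (xb n) - xb n))"
    unfolding hs_def by (rule norm_triangle_ineq2)
  also have "\<dots> \<le> norm (xh (xb (Suc n)) - xh (xb n)) + norm (xb (Suc n) - xb n)"
  proof -
    have "(xh (xb (Suc n)) - xb (Suc n)) - (xh (xb n) - xb n) = (xh (xb (Suc n)) - xh (xb n)) - (xb (Suc n) - xb n)"
      by (simp add: algebra_simps)
    then show ?thesis using norm_triangle_ineq4 by metis
  qed
  also have "\<dots> \<le> Lh * norm (xb (Suc n) - xb n) + norm (xb (Suc n) - xb n)"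
    using xh_lip[OF xbK xbK] by simp
  also have "\<dots> = (Lh + 1) * norm (xb (Suc n) - xb n)" by (simp add: algebra_simps)
  also have "\<dots> \<le> (Lh + 1) * (\<alpha> n * Mbnd)" using xb_move Lh_nonneg by (intro mult_left_mono) auto
  finally show ?thesis by (simp add: algebra_simps)
qed

lemma hs_lim: "hs \<longlonglongrightarrow> 0"
proof -
  define g where "g n = (hs n)\<^sup>2" for n
  define c where "c = 2 * Hb * ((Lh + 1) * Mbnd) + 1"
  have Hb0: "Hb \<ge> 0" using hs_bdd[of 0] hs_nonneg[of 0] by simp
  have "2 * Hb * ((Lh + 1) * Mbnd) \<ge> 0" using Hb0 Lh_nonneg Mbnd_nonneg by simp
  then have c: "c > 0" unfolding c_def by linarith
  have inc: "g (Suc n) - g n \<le> c * \<alpha> n" for n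
  proof -
    have "g (Suc n) - g n = (hs (Suc n) - hs n) * (hs (Suc n) + hs n)" unfolding g_def by (simp add: power2_eq_square algebra_simps)
    also have "\<dots> \<le> ((Lh + 1) * Mbnd * \<alpha> n) * (2 * Hb)"
    proof (cases "hs (Suc n) - hs n \<ge> 0")
      case True
      have "hs (Suc n) + hs n \<le> 2 * Hb" using hs_bdd[of n] hs_bdd[of "Suc n"] by simp
      then show ?thesis using True hs_move[of n] hs_nonneg[of n] hs_nonneg[of "Suc n"]
        by (intro mult_mono) auto
    next
      case False
      then have "(hs (Suc n) - hs n) * (hs (Suc n) + hs n) \<le> 0" using hs_nonneg[of n] hs_nonneg[of "Suc n"]
        by (simp add: mult_nonpos_nonneg)
      moreover have "((Lh + 1) * Mbnd * \<alpha> n) * (2 * Hb) \<ge> 0" using Lh_nonneg Mbnd_nonneg \<alpha>_pos[of n] Hb0 by simp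
      ultimately show ?thesis by linarith
    qed
    also have "\<dots> \<le> c * \<alpha> n" unfolding c_def using \<alpha>_pos[of n] by (simp add: algebra_simps)
    finally show ?thesis .
  qed
  have sag: "summable (\<lambda>n. \<alpha> n * g n)"
  proof -
    have "summable (\<lambda>n. 2 * (Ch + 1)\<^sup>2 * Qmax * (\<alpha> n * Q n) + 2 * (\<alpha> n * (dd n 1)\<^sup>2))"
      by (intro summable_add summable_mult sum_aQ ad1_summ)
    then show ?thesis
    proof (rule summable_comparison_test'[where N = 0])
      fix n :: nat assume "n \<ge> 0"
      have h1: "(hs n)\<^sup>2 \<le> ((Ch + 1) * Q n + dd n 1)\<^sup>2" using hs_bound[of n] hs_nonneg[of n] by (intro power_mono) auto
      also have "\<dots> \<le> 2 * ((Ch + 1) * Q n)\<^sup>2 + 2 * (dd n 1)\<^sup>2"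
      proof -
        have "0 \<le> ((Ch + 1) * Q n - dd n 1)\<^sup>2" by simp
        then show ?thesis by (simp add: power2_eq_square algebra_simps)
      qed
      also have "((Ch + 1) * Q n)\<^sup>2 \<le> (Ch + 1)\<^sup>2 * Qmax * Q n"
      proof -
        have "(Q n)\<^sup>2 \<le> Qmax * Q n" using Q_bdd[of n] Q_nonneg[of n] by (simp add: power2_eq_square mult_right_mono)
        then show ?thesis using Ch_nonneg by (simp add: power_mult_distrib mult.assoc mult_left_mono)
      qed
      finally have "(hs n)\<^sup>2 \<le> 2 * ((Ch + 1)\<^sup>2 * Qmax * Q n) + 2 * (dd n 1)\<^sup>2" by simp
      then have "\<alpha> n * (hs n)\<^sup>2 \<le> \<alpha> n * (2 * ((Ch + 1)\<^sup>2 * Qmax * Q n) + 2 * (dd n 1)\<^sup>2)"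
        using \<alpha>_pos[of n] by (intro mult_left_mono) auto
      then show "norm (\<alpha> n * g n) \<le> 2 * (Ch + 1)\<^sup>2 * Qmax * (\<alpha> n * Q n) + 2 * (\<alpha> n * (dd n 1)\<^sup>2)"
        unfolding g_def using \<alpha>_pos[of n] by (simp add: algebra_simps)
    qed
  qed
  have "g \<longlonglongrightarrow> 0"
    by (rule cross_lemma[OF _ _ c inc \<alpha>_lim sag step(2)]) (use \<alpha>_pos in \<open>auto simp: g_def less_imp_le\<close>)
  then have "(\<lambda>n. sqrt (g n)) \<longlonglongrightarrow> sqrt 0" by (rule tendsto_real_sqrt)
  then show ?thesis unfolding g_def using hs_nonneg by simp
qed

end

context nxt
begin

lemma xb_eq: "(\<lambda>n. (1 / real I) *\<^sub>R (\<Sum>i\<in>{1..I}. x n i)) = xb"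
  by (simp add: xb_def fun_eq_iff)

lemma part_a1: "bounded (range (\<lambda>n. (1 / real I) *\<^sub>R (\<Sum>i\<in>{1..I}. x n i)))"
  unfolding xb_eq by (rule xb_bounded)

lemma part_b: "\<forall>i\<in>{1..I}. ((\<lambda>n. norm (x n i - (1 / real I) *\<^sub>R (\<Sum>j\<in>{1..I}. x n j))) \<longlongrightarrow> 0) sequentially"
proof
  fix i assume i: "i \<in> {1..I}"
  show "((\<lambda>n. norm (x n i - (1 / real I) *\<^sub>R (\<Sum>j\<in>{1..I}. x n j))) \<longlongrightarrow> 0) sequentially"
  proof (rule tendsto_sandwich[where f = "\<lambda>n. 0" and h = dx])
    show "\<forall>\<^sub>F n in sequentially. 0 \<le> norm (x n i - (1 / real I) *\<^sub>R (\<Sum>j\<in>{1..I}. x n j))" by simp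
    show "\<forall>\<^sub>F n in sequentially. norm (x n i - (1 / real I) *\<^sub>R (\<Sum>j\<in>{1..I}. x n j)) \<le> dx n"
    proof (intro always_eventually allI)
      fix n show "norm (x n i - (1 / real I) *\<^sub>R (\<Sum>j\<in>{1..I}. x n j)) \<le> dx n"
        using mean_dev[OF V_fin _ i, of "x n"] V_card I_pos unfolding dx_def by simp
    qed
  qed (auto simp: dx_lim)
qed

lemma part_a2:
  assumes r: "strict_mono r" and lim: "((\<lambda>k. (1 / real I) *\<^sub>R (\<Sum>i\<in>{1..I}. x (r k) i)) \<longlongrightarrow> xs) sequentially"
  shows "stationary K (\<lambda>u. \<Sum>i\<in>{1..I}. gf i u) G xs"
proof -
  have lim': "(xb \<circ> r) \<longlonglongrightarrow> xs" using lim unfolding xb_def comp_def by simp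
  have xsK: "xs \<in> K" using closed_sequentially[OF A1(2) _ lim'] xbK by auto
  have h0: "(hs \<circ> r) \<longlonglongrightarrow> 0" by (rule LIMSEQ_subseq_LIMSEQ[OF hs_lim r])
  then have "(\<lambda>k. xh (xb (r k)) - xb (r k)) \<longlonglongrightarrow> 0"
    unfolding hs_def comp_def by (simp add: tendsto_norm_zero_iff)
  then have "(\<lambda>k. (xh (xb (r k)) - xb (r k)) + xb (r k)) \<longlonglongrightarrow> 0 + xs"
    using lim' unfolding comp_def by (intro tendsto_add)
  then have L1: "(\<lambda>k. xh (xb (r k))) \<longlonglongrightarrow> xs" by simp
  have "(\<lambda>k. norm (xh (xb (r k)) - xh xs)) \<longlonglongrightarrow> 0"
  proof (rule tendsto_sandwich[where f = "\<lambda>k. 0" and h = "\<lambda>k. Lh * norm (xb (r k) - xs)"])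
    show "\<forall>\<^sub>F k in sequentially. 0 \<le> norm (xh (xb (r k)) - xh xs)" by simp
    show "\<forall>\<^sub>F k in sequentially. norm (xh (xb (r k)) - xh xs) \<le> Lh * norm (xb (r k) - xs)"
      using xh_lip[OF xbK xsK] by simp
    show "(\<lambda>k. 0) \<longlonglongrightarrow> (0::real)" by simp
    have "(\<lambda>k. xb (r k) - xs) \<longlonglongrightarrow> 0" using lim' unfolding comp_def by (simp add: LIM_zero_iff)
    then have "(\<lambda>k. norm (xb (r k) - xs)) \<longlonglongrightarrow> 0" by (simp add: tendsto_norm_zero_iff)
    then have "(\<lambda>k. Lh * norm (xb (r k) - xs)) \<longlonglongrightarrow> Lh * 0" by (rule tendsto_mult_left)
    then show "(\<lambda>k. Lh * norm (xb (r k) - xs)) \<longlonglongrightarrow> 0" by simp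
  qed
  then have L2: "(\<lambda>k. xh (xb (r k))) \<longlonglongrightarrow> xh xs" by (simp add: tendsto_norm_zero_iff LIM_zero_iff)
  have fx: "xh xs = xs" using LIMSEQ_unique[OF L2 L1] .
  have opt: "\<forall>w\<in>K. ft 1 xs xs + pf xs \<bullet> (xs - xs) + G xs \<le> ft 1 w xs + pf xs \<bullet> (w - xs) + G w"
    using xh_prop[OF xsK] fx by simp
  have der: "((\<lambda>w. ft 1 w xs + pf xs \<bullet> (w - xs)) has_derivative (\<lambda>h. (gft 1 xs xs + pf xs) \<bullet> h)) (at xs within K)"
  proof -
    have d1: "((\<lambda>w. ft 1 w xs) has_derivative (\<lambda>h. gft 1 xs xs \<bullet> h)) (at xs within K)" using F_diff one_V xsK by blast
    have d2: "((\<lambda>w. pf xs \<bullet> (w - xs)) has_derivative (\<lambda>h. pf xs \<bullet> h)) (at xs within K)"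
      by (auto intro!: derivative_eq_intros)
    have "((\<lambda>w. ft 1 w xs + pf xs \<bullet> (w - xs)) has_derivative (\<lambda>h. gft 1 xs xs \<bullet> h + pf xs \<bullet> h)) (at xs within K)"
      by (rule has_derivative_add[OF d1 d2])
    then show ?thesis by (simp add: inner_add_left)
  qed
  have ms: "\<forall>w\<in>K. G xs \<le> G w + (gft 1 xs xs + pf xs) \<bullet> (w - xs)"
    by (rule minstat[OF der A1(3) xsK Gconv]) (use opt in \<open>simp add: algebra_simps\<close>)
  have gg: "gft 1 xs xs + pf xs = gF xs" using F2 one_V xsK unfolding pf_def by simp
  obtain \<xi> where \<xi>: "\<xi> \<in> subdiff G xs" "\<forall>w\<in>K. (gF xs + \<xi>) \<bullet> (w - xs) \<ge> 0"
    using sum_rule[OF Gconv A1(3) xsK, of "gF xs"] ms gg by auto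
  show ?thesis unfolding stationary_def using xsK \<xi> unfolding gF_def by blast
qed

theorem main:
  shows "bounded (range (\<lambda>n. (1 / real I) *\<^sub>R (\<Sum>i\<in>{1..I}. x n i)))
       \<and> (\<forall>xs r. strict_mono r \<and>
             ((\<lambda>k. (1 / real I) *\<^sub>R (\<Sum>i\<in>{1..I}. x (r k) i)) \<longlongrightarrow> xs) sequentially
             \<longrightarrow> stationary K (\<lambda>u. \<Sum>i\<in>{1..I}. gf i u) G xs)
       \<and> (\<forall>i\<in>{1..I}. ((\<lambda>n. norm (x n i - (1 / real I) *\<^sub>R (\<Sum>j\<in>{1..I}. x n j))) \<longlongrightarrow> 0) sequentially)"
  using part_a1 part_a2 part_b by blast

end

theorem theorem1:
  fixes K :: "'a::euclidean_space set"
    and I :: nat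
    and f :: "nat \<Rightarrow> 'a \<Rightarrow> real" and gf :: "nat \<Rightarrow> 'a \<Rightarrow> 'a"
    and G :: "'a \<Rightarrow> real"
    and E :: "nat \<Rightarrow> (nat \<times> nat) set" and \<theta> :: "nat \<Rightarrow> nat \<Rightarrow> real" and \<theta>\<^sub>0 :: real
    and B :: nat
    and ft :: "nat \<Rightarrow> 'a \<Rightarrow> 'a \<Rightarrow> real" and gft :: "nat \<Rightarrow> 'a \<Rightarrow> 'a \<Rightarrow> 'a"
    and \<tau> :: "nat \<Rightarrow> real"
    and \<alpha> :: "nat \<Rightarrow> real"
    and x xt z y pit :: "nat \<Rightarrow> nat \<Rightarrow> 'a"
  assumes I_pos: "I \<ge> 1"
    \<comment> \<open>(A1)\<close>
    and A1: "K \<noteq> {}" "closed K" "convex K"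
    \<comment> \<open>(A2): each f_i is C^1 on an open set containing K, with gradient gf i\<close>
    and A2: "\<exists>S. open S \<and> K \<subseteq> S \<and> (\<forall>i\<in>{1..I}.
               (\<forall>u\<in>S. (f i has_derivative (\<lambda>h. gf i u \<bullet> h)) (at u)) \<and> continuous_on S (gf i))"
    \<comment> \<open>(A3)\<close>
    and A3: "\<forall>i\<in>{1..I}. \<exists>L. lipschitz_on L K (gf i)"
    \<comment> \<open>(A4)\<close>
    and A4: "\<exists>LF. \<forall>u\<in>K. norm (\<Sum>i\<in>{1..I}. gf i u) \<le> LF"
    \<comment> \<open>(A5)\<close>
    and A5: "convex_on UNIV G" "\<exists>LG. \<forall>u\<in>K. \<forall>\<xi>\<in>subdiff G u. norm \<xi> \<le> LG"
    \<comment> \<open>(A6)\<close>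
    and A6: "coercive_on K (\<lambda>u. (\<Sum>i\<in>{1..I}. f i u) + G u)"
    \<comment> \<open>network: digraphs on vertex set {1..I}, weights\<close>
    and E_sub: "\<forall>n. E n \<subseteq> {1..I} \<times> {1..I}"
    and vt_range: "0 < \<theta>\<^sub>0" "\<theta>\<^sub>0 < 1"
    and theta_range: "\<forall>i\<in>{1..I}. \<forall>j\<in>{1..I}. \<theta>\<^sub>0 \<le> \<theta> i j \<and> \<theta> i j \<le> 1"
    \<comment> \<open>(B1)\<close>
    and B1: "B > 0" "\<forall>k. strongly_connected_dg {1..I} (\<Union>n\<in>{k*B..<(k+1)*B}. E n)"
    \<comment> \<open>(B2)\<close>
    and B2: "\<forall>n. \<forall>i\<in>{1..I}. (\<Sum>j\<in>{1..I}. weight E \<theta> n i j) = 1"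
            "\<forall>n. \<forall>j\<in>{1..I}. (\<Sum>i\<in>{1..I}. weight E \<theta> n i j) = 1"
    \<comment> \<open>surrogates: gradient in the first argument\<close>
    and F_diff: "\<forall>i\<in>{1..I}. \<forall>v\<in>K. \<forall>u\<in>K.
               ((\<lambda>w. ft i w v) has_derivative (\<lambda>h. gft i u v \<bullet> h)) (at u within K)"
    \<comment> \<open>(F1)\<close>
    and F1: "\<forall>i\<in>{1..I}. \<tau> i > 0 \<and> (\<forall>v\<in>K. strongly_convex_on K (\<tau> i) (\<lambda>w. ft i w v))"
    \<comment> \<open>(F2)\<close>
    and F2: "\<forall>i\<in>{1..I}. \<forall>u\<in>K. gft i u u = gf i u"
    \<comment> \<open>(F3)\<close>
    and F3: "\<forall>i\<in>{1..I}. \<exists>L. \<forall>u\<in>K. lipschitz_on L K (\<lambda>v. gft i u v)"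
    \<comment> \<open>step sizes\<close>
    and step: "\<forall>n. 0 < \<alpha> n \<and> \<alpha> n \<le> 1" "\<not> summable \<alpha>" "summable (\<lambda>n. (\<alpha> n)\<^sup>2)"
    \<comment> \<open>exact NEXT iteration\<close>
    and init: "\<forall>i\<in>{1..I}. x 0 i \<in> K \<and> y 0 i = gf i (x 0 i)"
    and pit_def: "\<forall>n. \<forall>i\<in>{1..I}. pit n i = real I *\<^sub>R y n i - gf i (x n i)"
    and xt_def: "\<forall>n. \<forall>i\<in>{1..I}. xt n i \<in> K \<and>
               (\<forall>w\<in>K. ft i (xt n i) (x n i) + pit n i \<bullet> (xt n i - x n i) + G (xt n i)
                       \<le> ft i w (x n i) + pit n i \<bullet> (w - x n i) + G w)"
    and z_def: "\<forall>n. \<forall>i\<in>{1..I}. z n i = x n i + \<alpha> n *\<^sub>R (xt n i - x n i)"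
    and x_upd: "\<forall>n. \<forall>i\<in>{1..I}. x (Suc n) i = (\<Sum>j\<in>{1..I}. weight E \<theta> n i j *\<^sub>R z n j)"
    and y_upd: "\<forall>n. \<forall>i\<in>{1..I}. y (Suc n) i =
               (\<Sum>j\<in>{1..I}. weight E \<theta> n i j *\<^sub>R y n j) + gf i (x (Suc n) i) - gf i (x n i)"
  shows "bounded (range (\<lambda>n. (1 / real I) *\<^sub>R (\<Sum>i\<in>{1..I}. x n i)))
       \<and> (\<forall>xs r. strict_mono r \<and>
             ((\<lambda>k. (1 / real I) *\<^sub>R (\<Sum>i\<in>{1..I}. x (r k) i)) \<longlongrightarrow> xs) sequentially
             \<longrightarrow> stationary K (\<lambda>u. \<Sum>i\<in>{1..I}. gf i u) G xs)
       \<and> (\<forall>i\<in>{1..I}. ((\<lambda>n. norm (x n i - (1 / real I) *\<^sub>R (\<Sum>j\<in>{1..I}. x n j))) \<longlongrightarrow> 0) sequentially)"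
proof -
  obtain S where S: "open S" "K \<subseteq> S" "\<forall>i\<in>{1..I}. (\<forall>u\<in>S. (f i has_derivative (\<lambda>h. gf i u \<bullet> h)) (at u)) \<and> continuous_on S (gf i)"
    using A2 by blast
  from bchoice[OF A3] obtain Lf where Lf: "\<forall>i\<in>{1..I}. lipschitz_on (Lf i) K (gf i)" ..
  define LL where "LL = (\<Sum>i\<in>{1..I}. Lf i)"
  have LL: "\<forall>i\<in>{1..I}. lipschitz_on LL K (gf i)"
  proof
    fix i assume i: "i \<in> {1..I}"
    have "Lf j \<ge> 0" if "j \<in> {1..I}" for j
    proof -
      have "lipschitz_on (Lf j) K (gf j)" using Lf that by blast
      then show ?thesis by (rule lipschitz_on_nonneg)
    qed
    then have le: "Lf i \<le> LL" unfolding LL_def using i by (intro member_le_sum) auto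
    have "lipschitz_on (Lf i) K (gf i)" using Lf i by blast
    then show "lipschitz_on LL K (gf i)" using le by (rule lipschitz_on_le)
  qed
  from bchoice[OF F3] obtain Ls where Ls: "\<forall>i\<in>{1..I}. \<forall>u\<in>K. lipschitz_on (Ls i) K (\<lambda>v. gft i u v)" ..
  define LS where "LS = (\<Sum>i\<in>{1..I}. Ls i)"
  have LS: "\<forall>i\<in>{1..I}. \<forall>u\<in>K. lipschitz_on LS K (\<lambda>v. gft i u v)"
  proof (intro ballI)
    fix i u assume i: "i \<in> {1..I}" and u: "u \<in> K"
    have "Ls j \<ge> 0" if "j \<in> {1..I}" for j
    proof -
      have "lipschitz_on (Ls j) K (\<lambda>v. gft j u v)" using Ls that u by blast
      then show ?thesis by (rule lipschitz_on_nonneg)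
    qed
    then have le: "Ls i \<le> LS" unfolding LS_def using i by (intro member_le_sum) auto
    have "lipschitz_on (Ls i) K (\<lambda>v. gft i u v)" using Ls i u by blast
    then show "lipschitz_on LS K (\<lambda>v. gft i u v)" using le by (rule lipschitz_on_le)
  qed
  obtain LF where LF: "\<forall>u\<in>K. norm (\<Sum>i\<in>{1..I}. gf i u) \<le> LF" using A4 by blast
  obtain LG where LG: "\<forall>u\<in>K. \<forall>\<xi>\<in>subdiff G u. norm \<xi> \<le> LG" using A5(2) by blast
  have fder: "\<forall>i\<in>{1..I}. \<forall>u\<in>S. (f i has_derivative (\<lambda>h. gf i u \<bullet> h)) (at u)" using S(3) by blast
  interpret nxt I E \<theta> \<theta>\<^sub>0 B K f gf G ft gft \<tau> \<alpha> x xt z y pit LL LS LF LG S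
    by unfold_locales (fact I_pos E_sub vt_range theta_range B1 B2 A1 S(1) S(2) fder LL LF A5(1) LG A6 F_diff F1 F2 LS step init pit_def xt_def z_def x_upd y_upd)+
  show ?thesis by (rule main)
qed

end
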